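(* Let $g\ge1$ and let $\mathcal M_{2g+1}$, $V^{(2g+1)}$, $\mathcal M_A$, $H_i$ and $\widetilde{\mathcal S}$ be as in the context. Then $V^{(2g+1)}(h_1,\dots,h_{2g+1})\in\widetilde{\mathcal S}$ for every point $(h_1,\dots,h_{2g+1})\in\mathcal M_{2g+1}$. Moreover, the image $\widetilde{\mathcal Q}$ of the map $V^{(2g+1)}:\mathcal M_{2g+1}\to\widetilde{\mathcal S}$ is transversal to the distribution $E$ on $\widetilde{\mathcal S}$ spanned by the vector field $\dot X(\lambda)=[A,X(\lambda)]$.
   Context: Given a formal Laurent series $h=z+\sum_{l\ge1}h_lz^{-l}$, put $\lambda=z^2$ and define $H^{(0)}=1$, $H^{(1)}=h$, $H^{(2)}=z^2$, $H^{(k+2)}=z^2H^{(k)}-H^k_1h-H^k_2$ ($k\ge1$), where $H^k_l$ is the coefficient of $z^{-l}$ in $H^{(k)}$ (so $H^{(k)}=z^k+\sum_{l\ge1}H^k_lz^{-l}$, $H^1_l=h_l$). Each $H^{(k)}$ and each series $H^{(j+1)}+\sum_{l=1}^jh_lH^{(j-l)}+H^j_1$ can be written uniquely as $a(\lambda)+b(\lambda)h$ with $a,b$ polynomials. $V^{(j)}$ is the $2\times2$ polynomial matrix with first row $(p_j,q_j)$ where $H^{(j)}=p_j+q_jh$, and second row $(a_j,b_j)$ where $H^{(j+1)}+\sum_{l=1}^jh_lH^{(j-l)}+H^j_1=a_j+b_jh$. The $j$-th flow of the $\mathrm{CS}_2$ hierarchy is $\partial h/\partial t_j=-hH^{(j)}+H^{(j+1)}+\sum_{l=1}^jh_lH^{(j-l)}+H^j_1$.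 The phase space $\mathcal M_{2g+1}$ of the $\mathrm{KdV}_{2g+1}$ system is the set of $h$ such that $\partial h/\partial t_{2g+1}=0$ (as a Laurent series); on it all $h_l$ are determined by $(h_1,\dots,h_{2g+1})$, which serve as coordinates, and $V^{(2g+1)}$ is a function of these. $\mathcal M_A=\{X(\lambda)=\lambda^{g+1}A+\sum_{i=0}^g\lambda^iX_i\mid X_i\in\mathfrak{sl}(2)\}$ with $A=\begin{pmatrix}0&0\\1&0\end{pmatrix}$; $H_i$ is the coefficient of $\lambda^i$ in $\tfrac12\mathrm{Tr}\,X(\lambda)^2$; $\widetilde{\mathcal S}\subset\mathcal M_A$ is the submanifold defined by $H_{2g+1}=1$ and $H_i=0$ for $g+1\le i\le 2g$ (a symplectic leaf of the Poisson tensor $P_0$ on $\mathcal M_A$). The vector field $[A,X(\lambda)]$ is tangent to $\widetilde{\mathcal S}$. Transversality means that at each point of $\widetilde{\mathcal Q}$ the tangent space of $\widetilde{\mathcal S}$ is the direct sum of the tangent space of $\widetilde{\mathcal Q}$ and the line of $E$. *)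

theory Defs
  imports "HOL-Analysis.Analysis" "HOL-Computational_Algebra.Polynomial"
    "HOL-Computational_Algebra.Formal_Laurent_Series"
begin

text \<open>Laurent series in z with finitely many positive powers of z are represented as
  formal Laurent series in w = z^{-1}: the coefficient of z^{-l} of F is fls_nth F l,
  and z itself is fls_X_inv.\<close>

abbreviation zz :: "complex fls" where "zz \<equiv> fls_X_inv"

text \<open>h has the shape z + sum over l \<ge> 1 of h_l z^{-l}.\<close>
definition h_shape :: "complex fls \<Rightarrow> bool" where
  "h_shape h \<longleftrightarrow> fls_nth h (-1) = 1 \<and> fls_nth h 0 = 0 \<and> (\<forall>n. n \<le> -2 \<longrightarrow> fls_nth h n = 0)"

fun Hs :: "complex fls \<Rightarrow> nat \<Rightarrow> complex fls" where
  "Hs h 0 = 1"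
| "Hs h (Suc 0) = h"
| "Hs h (Suc (Suc 0)) = zz ^ 2"
| "Hs h (Suc (Suc (Suc k))) =
     zz ^ 2 * Hs h (Suc k) - fls_const (fls_nth (Hs h (Suc k)) 1) * h - fls_const (fls_nth (Hs h (Suc k)) 2)"

definition Ss :: "complex fls \<Rightarrow> nat \<Rightarrow> complex fls" where
  "Ss h j = Hs h (j + 1) + (\<Sum>l\<in>{1..j}. fls_const (fls_nth h (int l)) * Hs h (j - l))
            + fls_const (fls_nth (Hs h j) 1)"

definition flow :: "complex fls \<Rightarrow> nat \<Rightarrow> complex fls" where
  "flow h j = - h * Hs h j + Ss h j"

definition Mkdv :: "nat \<Rightarrow> complex fls set" where
  "Mkdv g = {h. h_shape h \<and> flow h (2*g+1) = 0}"

definition lam :: "complex poly \<Rightarrow> complex fls" where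
  "lam a = poly (map_poly fls_const a) (zz ^ 2)"

definition decomp :: "complex fls \<Rightarrow> complex fls \<Rightarrow> complex poly \<times> complex poly" where
  "decomp h F = (THE ab. F = lam (fst ab) + lam (snd ab) * h)"

definition mat2 :: "'a::zero \<Rightarrow> 'a \<Rightarrow> 'a \<Rightarrow> 'a \<Rightarrow> 'a^2^2" where
  "mat2 a b c d = (\<chi> r s. if r = 1 then (if s = 1 then a else b) else (if s = 1 then c else d))"

text \<open>A polynomial 2x2 matrix is represented by its coefficient sequence:
  X i is the (2x2 complex) coefficient of lambda^i.\<close>
type_synonym pmat = "nat \<Rightarrow> complex^2^2"

definition Vmat :: "nat \<Rightarrow> complex fls \<Rightarrow> pmat" where
  "Vmat j h = (let pq = decomp h (Hs h j); ab = decomp h (Ss h j) in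
     (\<lambda>i. mat2 (coeff (fst pq) i) (coeff (snd pq) i) (coeff (fst ab) i) (coeff (snd ab) i)))"

definition Vcoord :: "nat \<Rightarrow> (nat \<Rightarrow> complex) \<Rightarrow> pmat" where
  "Vcoord g c = Vmat (2*g+1) (THE h. h \<in> Mkdv g \<and> (\<forall>l\<in>{1..2*g+1}. fls_nth h (int l) = c l))"

definition Amat :: "complex^2^2" where "Amat = mat2 0 0 1 0"

definition msc :: "complex \<Rightarrow> complex^2^2 \<Rightarrow> complex^2^2" where
  "msc t M = (\<chi> r s. t * M $ r $ s)"

definition MA :: "nat \<Rightarrow> pmat set" where
  "MA g = {X. X (g+1) = Amat \<and> (\<forall>i\<le>g. trace (X i) = 0) \<and> (\<forall>i>g+1. X i = 0)}"

definition Hc :: "pmat \<Rightarrow> nat \<Rightarrow> complex" where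
  "Hc X i = (1/2) * trace (\<Sum>a\<le>i. X a ** X (i - a))"

definition Stilde :: "nat \<Rightarrow> pmat set" where
  "Stilde g = {X \<in> MA g. Hc X (2*g+1) = 1 \<and> (\<forall>i\<in>{g+1..2*g}. Hc X i = 0)}"

text \<open>Tangent space of S~ at X: tangent vectors Y of the affine space M_A
  (sum_{i \<le> g} lambda^i Y_i, Y_i in sl(2)) annihilated by the differentials of the
  defining functions H_i, g+1 \<le> i \<le> 2g+1.\<close>
definition TStilde :: "nat \<Rightarrow> pmat \<Rightarrow> pmat set" where
  "TStilde g X = {Y. (\<forall>i>g. Y i = 0) \<and> (\<forall>i. trace (Y i) = 0) \<and>
     (\<forall>i\<in>{g+1..2*g+1}. ((\<lambda>t. Hc (\<lambda>m. X m + msc t (Y m)) i) has_field_derivative 0) (at 0))}"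

definition Efield :: "pmat \<Rightarrow> pmat" where
  "Efield X = (\<lambda>i. Amat ** X i - X i ** Amat)"

end

theory Submission
  imports Defs
begin


lemma lam_pCons: "lam (pCons a p) = fls_const a + zz^2 * lam p"
  by (simp add: lam_def map_poly_pCons)

lemma lam_0 [simp]: "lam 0 = 0"
  by (simp add: lam_def)

lemma lam_const: "lam [:a:] = fls_const a"
  by (simp add: lam_pCons)

lemma lam_add: "lam (p + q) = lam p + lam q"
proof (induction p arbitrary: q rule: pCons_induct)
  case 0 then show ?case by simp
next
  case (pCons a p)
  show ?case
  proof (cases q rule: pCons_cases)
    case (pCons b q')
    then show ?thesis using pCons.IH[of q']
      by (simp add: lam_pCons algebra_simps fls_plus_const[symmetric])
  qed
qed

lemma lam_uminus: "lam (- p) = - lam p"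
  by (induction p rule: pCons_induct) (simp_all add: lam_pCons algebra_simps)

lemma lam_diff: "lam (p - q) = lam p - lam q"
  using lam_add[of p "-q"] lam_uminus[of q] by simp

lemma lam_smult: "lam (smult c p) = fls_const c * lam p"
  by (induction p rule: pCons_induct) (simp_all add: lam_pCons algebra_simps)

lemma lam_mult: "lam (p * q) = lam p * lam q"
  by (induction p rule: pCons_induct) (simp_all add: lam_pCons algebra_simps lam_add lam_smult)

lemma lam_nth: "fls_nth (lam a) n = (if n \<le> 0 \<and> even n then coeff a (nat (-n) div 2) else 0)"
proof (induction a arbitrary: n rule: pCons_induct)
  case 0 then show ?case by simp
next
  case (pCons a p)
  have sh: "fls_nth (zz^2 * lam p) n = fls_nth (lam p) (n + 2)"
    by (simp add: fls_X_inv_power_times_conv_shift)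
  show ?case
  proof (cases "n \<le> 0 \<and> even n")
    case True
    show ?thesis
    proof (cases "n = 0")
      case True then show ?thesis by (simp add: lam_pCons fls_X_inv_power_times_conv_shift pCons.IH)
    next
      case False
      with True have "n \<le> -2" by presburger
      then have "nat (-n) = Suc (Suc (nat (-(n+2))))" by linarith
      then have "nat (-n) div 2 = Suc (nat (-(n+2)) div 2)" by simp
      then show ?thesis using True False by (simp add: lam_pCons sh pCons.IH)
    qed
  next
    case False
    then show ?thesis by (auto simp add: lam_pCons sh pCons.IH)
  qed
qed

lemma lam_sum: "degree b \<le> N \<Longrightarrow> lam b = (\<Sum>k\<le>N. fls_const (coeff b k) * zz ^ (2*k))"
proof -
  assume N: "degree b \<le> N"
  have "lam b = (\<Sum>k\<le>degree b. fls_const (coeff b k) * zz ^ (2*k))"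
    unfolding lam_def poly_altdef
    by (simp add: degree_map_poly coeff_map_poly power_mult)
  also have "\<dots> = (\<Sum>k\<le>N. fls_const (coeff b k) * zz ^ (2*k))"
    by (rule sum.mono_neutral_left) (use N in \<open>auto simp: coeff_eq_0\<close>)
  finally show ?thesis .
qed

lemma lamh_nth: "degree b \<le> N \<Longrightarrow>
   fls_nth (lam b * h) n = (\<Sum>k\<le>N. coeff b k * fls_nth h (n + 2 * int k))"
proof -
  assume N: "degree b \<le> N"
  have "lam b * h = (\<Sum>k\<le>N. fls_const (coeff b k) * (zz ^ (2*k) * h))"
    by (simp add: lam_sum[OF N] sum_distrib_right mult.assoc)
  then show ?thesis
    by (simp add: fls_nth_sum fls_X_inv_power_times_conv_shift)
qed


definition inM :: "complex fls \<Rightarrow> complex fls \<Rightarrow> bool" where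
  "inM h F \<longleftrightarrow> (\<exists>a b. F = lam a + lam b * h)"

definition Hsh :: "complex fls \<Rightarrow> nat \<Rightarrow> bool" where
  "Hsh F k \<longleftrightarrow> (\<forall>n\<le>0. fls_nth F n = (if n = - int k then 1 else 0))"

lemma shape_nonpos: "h_shape h \<Longrightarrow> n \<le> 0 \<Longrightarrow> fls_nth h n = (if n = -1 then 1 else 0)"
  unfolding h_shape_def by (cases "n = -1"; cases "n = 0") auto

lemma lamh_odd:
  assumes h: "h_shape h" and N: "degree b \<le> N" "m \<le> N"
  shows "fls_nth (lam b * h) (-(2*int m+1)) =
     coeff b m + (\<Sum>k\<in>{m+1..N}. coeff b k * fls_nth h (int (2*(k-m)-1)))"
proof -
  let ?f = "\<lambda>k. coeff b k * fls_nth h (-(2*int m+1) + 2 * int k)"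
  have "fls_nth (lam b * h) (-(2*int m+1)) = (\<Sum>k\<le>N. ?f k)"
    by (rule lamh_nth[OF N(1)])
  also have "\<dots> = (\<Sum>k\<in>insert m {m+1..N}. ?f k)"
  proof (rule sum.mono_neutral_right)
    show "\<forall>i\<in>{..N} - insert m {m + 1..N}. ?f i = 0"
    proof
      fix i assume "i \<in> {..N} - insert m {m + 1..N}"
      then have "i < m" by auto
      then have "-(2*int m+1) + 2 * int i \<le> 0" "-(2*int m+1) + 2 * int i \<noteq> -1" by auto
      then show "?f i = 0" using shape_nonpos[OF h] by simp
    qed
  qed (use N in auto)
  also have "\<dots> = ?f m + (\<Sum>k\<in>{m+1..N}. ?f k)" by (subst sum.insert) auto
  also have "(\<Sum>k\<in>{m+1..N}. ?f k) = (\<Sum>k\<in>{m+1..N}. coeff b k * fls_nth h (int (2*(k-m)-1)))"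
    by (rule sum.cong) (auto simp: of_nat_diff algebra_simps)
  finally show ?thesis using shape_nonpos[OF h, of "-1"] by simp
qed

lemma lamh_even:
  assumes h: "h_shape h" and N: "degree b \<le> N"
  shows "fls_nth (lam b * h) (-(2*int m)) =
     (\<Sum>k\<in>{m+1..N}. coeff b k * fls_nth h (int (2*(k-m))))"
proof -
  let ?f = "\<lambda>k. coeff b k * fls_nth h (-(2*int m) + 2 * int k)"
  have "fls_nth (lam b * h) (-(2*int m)) = (\<Sum>k\<le>N. ?f k)"
    by (rule lamh_nth[OF N(1)])
  also have "\<dots> = (\<Sum>k\<in>{m+1..N}. ?f k)"
  proof (rule sum.mono_neutral_right)
    show "\<forall>i\<in>{..N} - {m + 1..N}. ?f i = 0"
    proof
      fix i assume "i \<in> {..N} - {m + 1..N}"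
      then have "i \<le> m" by auto
      then have "-(2*int m) + 2 * int i \<le> 0" by simp
      moreover have "-(2*int m) + 2 * int i \<noteq> -1" by presburger
      ultimately show "?f i = 0" using shape_nonpos[OF h] by simp
    qed
  qed auto
  also have "\<dots> = (\<Sum>k\<in>{m+1..N}. coeff b k * fls_nth h (int (2*(k-m))))"
    by (rule sum.cong) (auto simp: of_nat_diff algebra_simps)
  finally show ?thesis .
qed

lemma lamh_one:
  assumes N: "degree b \<le> N"
  shows "fls_nth (lam b * h) 1 = (\<Sum>k\<le>N. coeff b k * fls_nth h (int (2*k+1)))"
  using lamh_nth[OF N, of h 1] by (simp add: algebra_simps)

lemma lam_nth_odd: "fls_nth (lam a) (-(2*int m+1)) = 0"
  by (simp add: lam_nth)

lemma lam_nth_even: "fls_nth (lam a) (-(2*int m)) = coeff a m"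
proof -
  have "nat (2 * int m) = 2 * m" by simp
  then show ?thesis by (simp add: lam_nth)
qed

lemma lam_1: "lam 1 = 1"
  by (simp add: lam_def map_poly_1)

lemma lam_nth_pos: "n > 0 \<Longrightarrow> fls_nth (lam a) n = 0"
  by (simp add: lam_nth)

lemma MU:
  assumes h: "h_shape h" and z: "\<forall>n\<le>0. fls_nth (lam a + lam b * h) n = 0"
  shows "a = 0 \<and> b = 0"
proof -
  have b: "b = 0"
  proof (rule ccontr)
    assume "b \<noteq> 0"
    let ?d = "degree b"
    have "fls_nth (lam a + lam b * h) (-(2*int ?d+1)) = coeff b ?d"
      using lamh_odd[OF h order.refl order.refl] lam_nth_odd[of a "degree b"] by simp
    moreover have "coeff b ?d \<noteq> 0" using \<open>b \<noteq> 0\<close> by simp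
    moreover have "-(2*int ?d+1) \<le> 0" by simp
    ultimately show False using z by simp
  qed
  have "coeff a m = 0" for m
    using z[rule_format, of "-(2*int m)"] b by (simp add: lam_nth_even)
  then have "a = 0" by (simp add: poly_eqI)
  with b show ?thesis by simp
qed

lemma MU_eq:
  assumes h: "h_shape h" and z: "\<forall>n\<le>0. fls_nth F n = fls_nth G n" and "inM h F" "inM h G"
  shows "F = G"
proof -
  obtain a b a' b' where F: "F = lam a + lam b * h" and G: "G = lam a' + lam b' * h"
    using assms(3,4) unfolding inM_def by blast
  have "F - G = lam (a - a') + lam (b - b') * h" by (simp add: F G lam_diff algebra_simps)
  moreover have "\<forall>n\<le>0. fls_nth (F - G) n = 0" using z by simp
  ultimately have "a - a' = 0 \<and> b - b' = 0" using MU[OF h] by metis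
  then show ?thesis using F G by simp
qed

lemma decomp_eq:
  assumes h: "h_shape h" and F: "F = lam a + lam b * h"
  shows "decomp h F = (a, b)"
proof -
  have "(THE ab. F = lam (fst ab) + lam (snd ab) * h) = (a, b)"
  proof (rule the_equality)
    fix ab assume *: "F = lam (fst ab) + lam (snd ab) * h"
    have "lam (fst ab - a) + lam (snd ab - b) * h = 0"
      using * F by (simp add: lam_diff algebra_simps)
    then have "\<forall>n\<le>0. fls_nth (lam (fst ab - a) + lam (snd ab - b) * h) n = 0" by simp
    then have "fst ab - a = 0 \<and> snd ab - b = 0" using MU[OF h] by blast
    then show "ab = (a, b)" by (simp add: prod_eq_iff)
  qed (simp add: F)
  then show ?thesis by (simp add: decomp_def)
qed

lemma inM_add: "inM h F \<Longrightarrow> inM h G \<Longrightarrow> inM h (F + G)"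
proof -
  assume "inM h F" "inM h G"
  then obtain a b a' b' where "F = lam a + lam b * h" "G = lam a' + lam b' * h"
    unfolding inM_def by blast
  then have "F + G = lam (a + a') + lam (b + b') * h" by (simp add: lam_add algebra_simps)
  then show ?thesis unfolding inM_def by blast
qed

lemma inM_diff: "inM h F \<Longrightarrow> inM h G \<Longrightarrow> inM h (F - G)"
proof -
  assume "inM h F" "inM h G"
  then obtain a b a' b' where "F = lam a + lam b * h" "G = lam a' + lam b' * h"
    unfolding inM_def by blast
  then have "F - G = lam (a - a') + lam (b - b') * h" by (simp add: lam_diff algebra_simps)
  then show ?thesis unfolding inM_def by blast
qed

lemma inM_const_mult: "inM h F \<Longrightarrow> inM h (fls_const c * F)"
proof -
  assume "inM h F"
  then obtain a b where "F = lam a + lam b * h" unfolding inM_def by blast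
  then have "fls_const c * F = lam (smult c a) + lam (smult c b) * h" by (simp add: lam_smult algebra_simps)
  then show ?thesis unfolding inM_def by blast
qed

lemma inM_const: "inM h (fls_const c)"
  unfolding inM_def by (rule exI[of _ "[:c:]"], rule exI[of _ 0]) (simp add: lam_const)

lemma inM_h: "inM h h"
  unfolding inM_def by (rule exI[of _ 0], rule exI[of _ 1]) (simp add: lam_1)

lemma inM_zz2: "inM h F \<Longrightarrow> inM h (zz^2 * F)"
proof -
  assume "inM h F"
  then obtain a b where F: "F = lam a + lam b * h" unfolding inM_def by blast
  have "zz^2 * F = lam (pCons 0 a) + lam (pCons 0 b) * h"
    by (simp add: F lam_pCons algebra_simps)
  then show ?thesis unfolding inM_def by blast
qed

lemma inM_sum: "finite A \<Longrightarrow> (\<And>x. x \<in> A \<Longrightarrow> inM h (f x)) \<Longrightarrow> inM h (\<Sum>x\<in>A. f x)"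
proof (induction A rule: finite_induct)
  case empty then show ?case using inM_const[of h 0] by simp
next
  case (insert x F) then show ?case by (simp add: inM_add)
qed

lemma Hs_props: "h_shape h \<Longrightarrow> Hsh (Hs h k) k \<and> inM h (Hs h k)"
proof (induction h k rule: Hs.induct)
  case (1 h) then show ?case by (simp add: Hsh_def inM_const[of h 1, simplified])
next
  case (2 h) then show ?case by (simp add: Hsh_def inM_h shape_nonpos)
next
  case (3 h) then show ?case
    using inM_zz2[OF inM_const[of h 1]] by (simp add: Hsh_def)
next
  case (4 h k)
  then have IH: "Hsh (Hs h (Suc k)) (Suc k)" "inM h (Hs h (Suc k))" by auto
  have "inM h (Hs h (Suc (Suc (Suc k))))"
    by (simp, intro inM_diff inM_zz2 IH(2) inM_const_mult inM_h inM_const)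
  moreover have "Hsh (Hs h (Suc (Suc (Suc k)))) (Suc (Suc (Suc k)))"
    unfolding Hsh_def
  proof (intro allI impI)
    fix n :: int assume n: "n \<le> 0"
    have e: "fls_nth (zz^2 * Hs h (Suc k)) n = fls_nth (Hs h (Suc k)) (n+2)"
      by (simp add: fls_X_inv_power_times_conv_shift)
    show "fls_nth (Hs h (Suc (Suc (Suc k)))) n = (if n = - int (Suc (Suc (Suc k))) then 1 else 0)"
    proof (cases "n \<le> -2")
      case True
      then show ?thesis using IH(1) unfolding Hsh_def
        by (simp add: e shape_nonpos[OF "4.prems"])
    next
      case False
      then have "n = -1 \<or> n = 0" using n by auto
      then show ?thesis by (auto simp add: e shape_nonpos[OF "4.prems"])
    qed
  qed
  ultimately show ?case by simp
qed


definition topS :: "complex fls \<Rightarrow> nat \<Rightarrow> complex \<Rightarrow> int \<Rightarrow> complex" where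
  "topS h j c1 n = (if n = -(int j+1) then 1 else 0) + (if 1 - int j \<le> n then fls_nth h (int j + n) else 0)
      + (if n = 0 then c1 else 0)"

lemma sum_delta_int:
  fixes h :: "complex fls"
  assumes "n \<le> 0"
  shows "(\<Sum>l\<in>{1..j}. fls_nth h (int l) * (if n = - int (j - l) then 1 else 0)) =
         (if 1 - int j \<le> n then fls_nth h (int j + n) else 0)"
proof -
  have "(\<Sum>l\<in>{1..j}. fls_nth h (int l) * (if n = - int (j - l) then 1 else 0)) =
        (\<Sum>l\<in>{1..j}. if l = nat (int j + n) then fls_nth h (int j + n) else 0)"
  proof (rule sum.cong)
    fix l assume l: "l \<in> {1..j}"
    then have iff: "(n = - int (j - l)) \<longleftrightarrow> (l = nat (int j + n))" using assms by auto
    show "fls_nth h (int l) * (if n = - int (j - l) then 1 else 0) =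
        (if l = nat (int j + n) then fls_nth h (int j + n) else 0)"
    proof (cases "n = - int (j - l)")
      case True
      then have il: "int j + n = int l" using l by auto
      have 1: "(if n = - int (j - l) then 1 else 0) = (1::complex)" using True by simp
      have 2: "(if l = nat (int j + n) then fls_nth h (int j + n) else 0) = fls_nth h (int l)"
        unfolding il by simp
      show ?thesis unfolding 1 2 by simp
    next
      case False
      then have "l \<noteq> nat (int j + n)" using iff by blast
      then show ?thesis using False by simp
    qed
  qed simp
  also have "\<dots> = (if nat (int j + n) \<in> {1..j} then fls_nth h (int j + n) else 0)"
    by simp
  also have "\<dots> = (if 1 - int j \<le> n then fls_nth h (int j + n) else 0)"
    using assms by auto
  finally show ?thesis .
qed

lemma Ss_props:
  assumes h: "h_shape h"
  shows "inM h (Ss h j) \<and> (\<forall>n\<le>0. fls_nth (Ss h j) n = topS h j (fls_nth (Hs h j) 1) n)"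
proof
  show "inM h (Ss h j)" unfolding Ss_def
    by (intro inM_add inM_sum inM_const_mult inM_const Hs_props[OF h, THEN conjunct2]) auto
  show "\<forall>n\<le>0. fls_nth (Ss h j) n = topS h j (fls_nth (Hs h j) 1) n"
  proof (intro allI impI)
    fix n :: int assume n: "n \<le> 0"
    have H: "fls_nth (Hs h k) n = (if n = - int k then 1 else 0)" for k
      using Hs_props[OF h, of k] n unfolding Hsh_def by auto
    have "fls_nth (Ss h j) n = fls_nth (Hs h (j+1)) n +
          (\<Sum>l\<in>{1..j}. fls_nth h (int l) * fls_nth (Hs h (j - l)) n) + (if n = 0 then fls_nth (Hs h j) 1 else 0)"
      unfolding Ss_def by (simp add: fls_nth_sum)
    also have "\<dots> = topS h j (fls_nth (Hs h j) 1) n"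
      unfolding H topS_def using sum_delta_int[OF n, of h j] by simp
    finally show "fls_nth (Ss h j) n = topS h j (fls_nth (Hs h j) 1) n" .
  qed
qed

lemma prod_nonpos:
  assumes h: "h_shape h" and F: "Hsh F j" and n: "n \<le> 0"
  shows "fls_nth (h * F) n = topS h j (fls_nth F 1) n"
proof -
  define T where "T = h - zz"
  define G where "G = F - zz^j"
  have T0: "fls_nth T m = 0" if "m \<le> 0" for m
    using shape_nonpos[OF h that] that by (auto simp: T_def)
  have G0: "fls_nth G m = 0" if "m \<le> 0" for m
    using F that unfolding Hsh_def G_def by auto
  have TG: "fls_nth (T * G) m = 0" if "m \<le> 1" for m
  proof (cases "T = 0 \<or> G = 0")
    case False
    then have "fls_subdegree T \<ge> 1" "fls_subdegree G \<ge> 1"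
      using T0 G0 by (auto intro!: fls_subdegree_geI)
    then show ?thesis using that by (intro fls_times_nth_eq0) simp
  qed auto
  have zp: "fls_nth (zz * zz^j) m = (if m = -(int j+1) then 1 else 0)" for m
    by (simp add: fls_X_inv_times_conv_shift fls_X_inv_power_nth)
  have "h * F = zz^(j+1) + zz * G + zz^j * T + T * G"
    by (simp add: T_def G_def algebra_simps power_Suc)
  then have "fls_nth (h * F) n = fls_nth (zz^(j+1)) n + fls_nth G (n+1) + fls_nth T (n + int j) + fls_nth (T*G) n"
    by (simp add: fls_X_inv_times_conv_shift fls_X_inv_power_times_conv_shift)
  also have "fls_nth (T*G) n = 0" using TG n by simp
  also have "fls_nth G (n+1) = (if n = 0 then fls_nth F 1 else 0)"
    using G0[of "n+1"] n by (auto simp: G_def)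
  also have "fls_nth T (n + int j) = (if 1 - int j \<le> n then fls_nth h (int j + n) else 0)"
    using T0[of "n + int j"] by (auto simp: T_def algebra_simps)
  finally show ?thesis unfolding topS_def by (simp add: algebra_simps zp)
qed

lemma flow_zero_if_inM:
  assumes h: "h_shape h" and M: "inM h (h * Hs h j)"
  shows "flow h j = 0"
proof -
  have "Ss h j = h * Hs h j"
  proof (rule MU_eq[OF h])
    show "\<forall>n\<le>0. fls_nth (Ss h j) n = fls_nth (h * Hs h j) n"
      using Ss_props[OF h] prod_nonpos[OF h Hs_props[OF h, THEN conjunct1]] by simp
  qed (use Ss_props[OF h] M in auto)
  then show ?thesis by (simp add: flow_def)
qed


function Qf :: "nat \<Rightarrow> (nat \<Rightarrow> complex) \<Rightarrow> nat \<Rightarrow> complex" where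
  "Qf g c m = (if g < m then 0 else if m = g then 1 else
       - (\<Sum>k\<in>{m+1..g}. Qf g c k * c (2*(k-m) - 1)))"
  by pat_completeness auto
termination by (relation "Wellfounded.measure (\<lambda>(g,c,m). g - m)") auto

declare Qf.simps [simp del]

definition Pf :: "nat \<Rightarrow> (nat \<Rightarrow> complex) \<Rightarrow> nat \<Rightarrow> complex" where
  "Pf g c m = - (\<Sum>k\<in>{m+1..g}. Qf g c k * c (2*(k-m)))"

function Bf :: "nat \<Rightarrow> (nat \<Rightarrow> complex) \<Rightarrow> nat \<Rightarrow> complex" where
  "Bf g c m = (if m < g then c (2*g - 2*m) else 0) - (\<Sum>k\<in>{m+1..g}. Bf g c k * c (2*(k-m) - 1))"
  by pat_completeness auto
termination by (relation "Wellfounded.measure (\<lambda>(g,c,m). g - m)") auto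

declare Bf.simps [simp del]

definition H1f :: "nat \<Rightarrow> (nat \<Rightarrow> complex) \<Rightarrow> complex" where
  "H1f g c = (\<Sum>k\<le>g. Qf g c k * c (2*k+1))"

definition Af :: "nat \<Rightarrow> (nat \<Rightarrow> complex) \<Rightarrow> nat \<Rightarrow> complex" where
  "Af g c m = (if m = g+1 then 1 else 0) + (if m \<le> g then c (2*g+1-2*m) else 0)
     + (if m = 0 then H1f g c else 0) - (\<Sum>k\<in>{m+1..g}. Bf g c k * c (2*(k-m)))"

lemma Qf_gt: "g < m \<Longrightarrow> Qf g c m = 0" by (subst Qf.simps) simp
lemma Qf_g: "Qf g c g = 1" by (subst Qf.simps) simp
lemma Qf_lt: "m < g \<Longrightarrow> Qf g c m = - (\<Sum>k\<in>{m+1..g}. Qf g c k * c (2*(k-m) - 1))"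
  by (subst Qf.simps) simp
lemma Bf_ge: "g \<le> m \<Longrightarrow> Bf g c m = 0" by (subst Bf.simps) simp
lemma Bf_lt: "m < g \<Longrightarrow> Bf g c m = c (2*g - 2*m) - (\<Sum>k\<in>{m+1..g}. Bf g c k * c (2*(k-m) - 1))"
  by (subst Bf.simps) simp
lemma Pf_ge: "g \<le> m \<Longrightarrow> Pf g c m = 0" by (simp add: Pf_def)

lemma Hsh_odd: "Hsh F (2*g+1) \<Longrightarrow> fls_nth F (-(2*int m+1)) = (if m = g then 1 else 0)"
  unfolding Hsh_def by (drule spec[of _ "-(2*int m+1)"]) auto

lemma Hsh_even: "Hsh F (2*g+1) \<Longrightarrow> fls_nth F (-(2*int m)) = 0"
proof -
  assume "Hsh F (2*g+1)"
  moreover have "-(2*int m) \<noteq> - int (2*g+1)" by presburger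
  ultimately show ?thesis unfolding Hsh_def by auto
qed

lemma lam_nth_odd': "fls_nth (lam a) (-(2*int m) - 1) = 0"
  by (simp add: lam_nth)

lemma topS_odd: "topS h (2*g+1) c1 (-(2*int m+1)) = (if m < g then fls_nth h (int (2*g-2*m)) else 0)"
proof -
  have "-(2*int m+1) \<noteq> -(int (2*g+1)+1)" by presburger
  moreover have "(1 - int (2*g+1) \<le> -(2*int m+1)) \<longleftrightarrow> m < g" by auto
  moreover have "m < g \<Longrightarrow> int (2*g+1) + (-(2*int m+1)) = int (2*g-2*m)" by auto
  ultimately show ?thesis unfolding topS_def by auto
qed

lemma topS_even: "topS h (2*g+1) c1 (-(2*int m)) = (if m = g+1 then 1 else 0) +
    (if m \<le> g then fls_nth h (int (2*g+1-2*m)) else 0) + (if m = 0 then c1 else 0)"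
proof -
  have "(-(2*int m) = -(int (2*g+1)+1)) \<longleftrightarrow> m = g+1" by auto
  moreover have "(1 - int (2*g+1) \<le> -(2*int m)) \<longleftrightarrow> m \<le> g" by auto
  moreover have "m \<le> g \<Longrightarrow> int (2*g+1) + (-(2*int m)) = int (2*g+1-2*m)" by auto
  ultimately show ?thesis unfolding topS_def by auto
qed

lemma cidx1: "k > m \<Longrightarrow> int (2*(k-m)-1) = int (2*(k-m)) - 1" by auto

lemma Hrep:
  assumes h: "h_shape h" and HE: "Hs h (2*g+1) = lam p + lam q * h"
  defines "c \<equiv> (\<lambda>l. fls_nth h (int l))"
  shows "(\<forall>m. coeff q m = Qf g c m) \<and> (\<forall>m. coeff p m = Pf g c m)"
proof -
  have Hs: "Hsh (Hs h (2*g+1)) (2*g+1)" using Hs_props[OF h] by blast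
  have eqO: "coeff q m + (\<Sum>k\<in>{m+1..N}. coeff q k * c (2*(k-m)-1)) = (if m = g then 1 else 0)"
    if "degree q \<le> N" "m \<le> N" for m N
  proof -
    have "fls_nth (Hs h (2*g+1)) (-(2*int m+1)) = (if m = g then 1 else 0)" by (rule Hsh_odd[OF Hs])
    moreover have "fls_nth (lam p + lam q * h) (-(2*int m+1)) =
        coeff q m + (\<Sum>k\<in>{m+1..N}. coeff q k * c (2*(k-m)-1))"
      using lamh_odd[OF h that] lam_nth_odd[of p m] by (simp only: fls_plus_nth c_def) simp
    ultimately show ?thesis unfolding HE by simp
  qed
  have degq: "degree q \<le> g"
  proof (rule ccontr)
    assume "\<not> degree q \<le> g"
    then have gt: "g < degree q" by simp
    have "coeff q (degree q) + (\<Sum>k\<in>{degree q+1..degree q}. coeff q k * c (2*(k-degree q)-1)) = 0"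
      using eqO[of "degree q" "degree q"] gt by simp
    then have "coeff q (degree q) = 0" by simp
    then have "q = 0" by simp
    then show False using gt by simp
  qed
  have q: "coeff q m = Qf g c m" for m
  proof (cases "g < m")
    case True then show ?thesis using degq by (simp add: Qf_gt coeff_eq_0)
  next
    case False
    then have "m \<le> g" by simp
    then show ?thesis
    proof (induction "g - m" arbitrary: m rule: less_induct)
      case less
      have e: "coeff q m + (\<Sum>k\<in>{m+1..g}. coeff q k * c (2*(k-m)-1)) = (if m = g then 1 else 0)"
        using eqO[OF degq less.prems] .
      have "(\<Sum>k\<in>{m+1..g}. coeff q k * c (2*(k-m)-1)) = (\<Sum>k\<in>{m+1..g}. Qf g c k * c (2*(k-m)-1))"
        by (rule sum.cong) (use less in auto)
      show ?case
      proof (cases "m = g")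
        case True
        then show ?thesis using e by (simp add: Qf_g)
      next
        case False
        then have "m < g" using less.prems by simp
        then have "coeff q m = - (\<Sum>k\<in>{m+1..g}. Qf g c k * c (2*(k-m)-1))"
          using e \<open>(\<Sum>k\<in>{m+1..g}. coeff q k * c (2*(k-m)-1)) = _\<close> False
          by (simp add: eq_neg_iff_add_eq_0)
        then show ?thesis using \<open>m < g\<close> by (simp add: Qf_lt)
      qed
    qed
  qed
  have p: "coeff p m = Pf g c m" for m
  proof -
    have "fls_nth (Hs h (2*g+1)) (-(2*int m)) = 0" by (rule Hsh_even[OF Hs])
    then have "coeff p m + (\<Sum>k\<in>{m+1..g}. coeff q k * c (2*(k-m))) = 0"
      unfolding HE using lamh_even[OF h degq, of m] by (simp add: lam_nth_even c_def)
    then show ?thesis unfolding Pf_def q by (simp add: eq_neg_iff_add_eq_0)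
  qed
  show ?thesis using p q by simp
qed

lemma Srep:
  assumes h: "h_shape h" and HE: "Hs h (2*g+1) = lam p + lam q * h"
    and SE: "Ss h (2*g+1) = lam a + lam b * h"
  defines "c \<equiv> (\<lambda>l. fls_nth h (int l))"
  shows "(\<forall>m. coeff b m = Bf g c m) \<and> (\<forall>m. coeff a m = Af g c m)"
proof -
  have qq: "\<forall>m. coeff q m = Qf g c m" using Hrep[OF h HE] unfolding c_def by blast
  have degq: "degree q \<le> g" by (rule degree_le) (simp add: qq Qf_gt)
  have H1: "fls_nth (Hs h (2*g+1)) 1 = H1f g c"
    unfolding HE H1f_def using lamh_one[OF degq, of h] by (simp add: lam_nth_pos qq c_def)
  have S: "fls_nth (Ss h (2*g+1)) n = topS h (2*g+1) (H1f g c) n" if "n \<le> 0" for n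
    using Ss_props[OF h, of "2*g+1"] that H1 by simp
  have eqO: "coeff b m + (\<Sum>k\<in>{m+1..N}. coeff b k * c (2*(k-m)-1)) = (if m < g then c (2*g-2*m) else 0)"
    if "degree b \<le> N" "m \<le> N" for m N
  proof -
    have "fls_nth (Ss h (2*g+1)) (-(2*int m+1)) = (if m < g then c (2*g-2*m) else 0)"
      using S[of "-(2*int m+1)"] topS_odd[of h g "H1f g c" m] by (simp only: c_def)
    moreover have "fls_nth (lam a + lam b * h) (-(2*int m+1)) =
        coeff b m + (\<Sum>k\<in>{m+1..N}. coeff b k * c (2*(k-m)-1))"
      using lamh_odd[OF h that] lam_nth_odd[of a m] by (simp only: fls_plus_nth c_def) simp
    ultimately show ?thesis unfolding SE by simp
  qed
  have bge: "coeff b m = 0" if "g \<le> m" for m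
  proof (cases "b = 0")
    case False
    have "degree b < g"
    proof (rule ccontr)
      assume "\<not> degree b < g"
      then have "coeff b (degree b) + (\<Sum>k\<in>{degree b+1..degree b}. coeff b k * c (2*(k-degree b)-1)) = 0"
        using eqO[of "degree b" "degree b"] by simp
      then have "coeff b (degree b) = 0" by simp
      then show False using False by simp
    qed
    then show ?thesis using that by (simp add: coeff_eq_0)
  qed simp
  have degb: "degree b \<le> g" by (rule degree_le) (simp add: bge)
  have bb: "coeff b m = Bf g c m" for m
  proof (cases "g \<le> m")
    case True then show ?thesis by (simp add: bge Bf_ge)
  next
    case False
    then have "m \<le> g" by simp
    then show ?thesis
    proof (induction "g - m" arbitrary: m rule: less_induct)
      case less
      have e: "coeff b m + (\<Sum>k\<in>{m+1..g}. coeff b k * c (2*(k-m)-1)) = (if m < g then c (2*g-2*m) else 0)"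
        using eqO[OF degb less.prems] .
      have "(\<Sum>k\<in>{m+1..g}. coeff b k * c (2*(k-m)-1)) = (\<Sum>k\<in>{m+1..g}. Bf g c k * c (2*(k-m)-1))"
        by (rule sum.cong) (use less in auto)
      show ?case
      proof (cases "m = g")
        case True
        then show ?thesis using e by (simp add: Bf_ge)
      next
        case False
        then have "m < g" using less.prems by simp
        then have "coeff b m = c (2*g-2*m) - (\<Sum>k\<in>{m+1..g}. Bf g c k * c (2*(k-m)-1))"
          using e \<open>(\<Sum>k\<in>{m+1..g}. coeff b k * c (2*(k-m)-1)) = _\<close>
          by (simp add: eq_diff_eq)
        then show ?thesis using \<open>m < g\<close> by (simp add: Bf_lt)
      qed
    qed
  qed
  have aa: "coeff a m = Af g c m" for m
  proof -
    have "fls_nth (Ss h (2*g+1)) (-(2*int m)) = (if m = g+1 then 1 else 0) +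
        (if m \<le> g then c (2*g+1-2*m) else 0) + (if m = 0 then H1f g c else 0)"
      using S[of "-(2*int m)"] topS_even[of h g "H1f g c" m] by (simp add: c_def)
    then have "coeff a m + (\<Sum>k\<in>{m+1..g}. coeff b k * c (2*(k-m))) = (if m = g+1 then 1 else 0) +
        (if m \<le> g then c (2*g+1-2*m) else 0) + (if m = 0 then H1f g c else 0)"
      unfolding SE using lamh_even[OF h degb, of m] by (simp add: lam_nth_even c_def)
    then show ?thesis unfolding Af_def bb by (simp add: algebra_simps eq_diff_eq)
  qed
  show ?thesis using aa bb by simp
qed


lemma lam_nth_zeroI:
  assumes "\<And>i. n = -(2*int i) \<Longrightarrow> coeff a i = 0"
  shows "fls_nth (lam a) n = 0"
proof (cases "n \<le> 0 \<and> even n")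
  case True
  then obtain k where k: "n = 2*k" by (auto elim: evenE)
  define i where "i = nat (-k)"
  have ni: "n = -(2*int i)" using True k by (simp add: i_def)
  have "nat (-n) div 2 = i" using ni by simp
  then show ?thesis using assms[OF ni] True by (simp add: lam_nth)
qed (auto simp: lam_nth)

lemma lam_nth_at: "n = -(2*int i) \<Longrightarrow> fls_nth (lam a) n = coeff a i"
  using lam_nth_even[of a i] by simp

lemma sqrt_exists:
  fixes R :: "complex poly"
  assumes R: "\<forall>i>g. coeff R i = (if i = 2*g+1 then 1 else 0)"
  shows "\<exists>s. s^2 = lam R \<and> Hsh s (2*g+1)"
proof -
  define T where "T = fls_shift (- int (4*g+2)) (lam R)"
  have T_nth: "fls_nth T n = fls_nth (lam R) (n - int (4*g+2))" for n
    by (simp add: T_def algebra_simps)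
  have T_neg: "fls_nth T n = 0" if "n < 0" for n
    unfolding T_nth
  proof (rule lam_nth_zeroI)
    fix i assume "n - int (4*g+2) = -(2*int i)"
    then have "i > 2*g+1" using that by linarith
    then show "coeff R i = 0" using R by auto
  qed
  have T0: "fls_nth T 0 = 1"
    unfolding T_nth using lam_nth_at[of "0 - int (4*g+2)" "2*g+1" R] R by simp
  have T_mid: "fls_nth T n = 0" if "0 < n" "n < int (2*g+2)" for n
    unfolding T_nth
  proof (rule lam_nth_zeroI)
    fix i assume "n - int (4*g+2) = -(2*int i)"
    then have "i > g" "i < 2*g+1" using that by linarith+
    then show "coeff R i = 0" using R by auto
  qed
  have Tsub: "fls_subdegree T \<ge> 0"
    by (rule fls_subdegree_ge0I) (simp add: T_neg)
  define A where "A = fls_regpart T"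
  have TA: "fps_to_fls A = T" unfolding A_def using Tsub by simp
  have A0: "fps_nth A 0 = 1" unfolding A_def using T0 by simp
  have Amid: "fps_nth A n = 0" if "0 < n" "n < 2*g+2" for n
    unfolding A_def using T_mid[of "int n"] that by simp
  define r where "r = fps_radical (\<lambda>_ _. 1::complex) 2 A"
  have r2: "r ^ 2 = A"
    using power_radical[of A "\<lambda>_ _. 1::complex" 1] A0 by (simp add: r_def numeral_2_eq_2)
  have r0: "fps_nth r 0 = 1" by (simp add: r_def)
  have rmid: "fps_nth r n = 0" if "0 < n" "n < 2*g+2" for n
    using that
  proof (induction n rule: less_induct)
    case (less n)
    have "fps_nth A n = fps_nth (r * r) n" using r2 by (simp add: power2_eq_square)
    also have "\<dots> = (\<Sum>i=0..n. fps_nth r i * fps_nth r (n - i))" by (rule fps_mult_nth)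
    also have "\<dots> = (\<Sum>i\<in>{0,n}. fps_nth r i * fps_nth r (n - i))"
    proof (rule sum.mono_neutral_right)
      show "\<forall>i\<in>{0..n} - {0, n}. fps_nth r i * fps_nth r (n - i) = 0"
        using less by auto
    qed auto
    also have "\<dots> = 2 * fps_nth r n" using less.prems r0 by simp
    finally have "2 * fps_nth r n = 0" using Amid[OF less.prems] by simp
    then show ?case by simp
  qed
  define s where "s = fls_shift (int (2*g+1)) (fps_to_fls r)"
  have s_alt: "s = zz^(2*g+1) * fps_to_fls r"
    by (simp only: s_def fls_X_inv_power_times_conv_shift)
  have pw: "(zz^(2*g+1))^2 = zz^(4*g+2)"
  proof -
    have "(zz^(2*g+1))^2 = zz^((2*g+1)*2)" by (simp only: power_mult)
    also have "(2*g+1)*2 = 4*g+2" by simp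
    finally show ?thesis .
  qed
  have "s^2 = (zz^(2*g+1))^2 * (fps_to_fls r)^2" by (simp only: s_alt power_mult_distrib)
  also have "\<dots> = zz^(4*g+2) * fps_to_fls (r^2)" by (simp only: pw fps_to_fls_power)
  also have "\<dots> = fls_shift (int (4*g+2)) T"
    by (simp only: r2 TA fls_X_inv_power_times_conv_shift)
  also have "\<dots> = lam R" by (simp add: T_def)
  finally have sq: "s^2 = lam R" .
  have sh: "Hsh s (2*g+1)"
    unfolding Hsh_def
  proof (intro allI impI)
    fix n :: int assume n: "n \<le> 0"
    have e: "fls_nth s n = (if n + int (2*g+1) < 0 then 0 else fps_nth r (nat (n + int (2*g+1))))"
      by (simp add: s_def)
    show "fls_nth s n = (if n = - int (2*g+1) then 1 else 0)"
    proof (cases "n = - int (2*g+1)")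
      case True then show ?thesis using e r0 by simp
    next
      case False
      note nf = False
      show ?thesis
      proof (cases "n + int (2*g+1) < 0")
        case False
        then have "0 < nat (n + int (2*g+1))" "nat (n + int (2*g+1)) < 2*g+2"
          using nf n by linarith+
        then show ?thesis using e rmid nf False by simp
      qed (use e nf in simp)
    qed
  qed
  show ?thesis using sq sh by blast
qed

lemma h_from_s:
  assumes g: "g \<ge> 1" and sq: "s^2 = lam (p*p + q*a)" and sh: "Hsh s (2*g+1)"
    and qg: "coeff q g = 1" and qhi: "\<forall>i>g. coeff q i = 0" and plo: "\<forall>i\<ge>g. coeff p i = 0"
  shows "\<exists>h. h_shape h \<and> flow h (2*g+1) = 0 \<and> Hs h (2*g+1) = lam p + lam q * h
            \<and> Ss h (2*g+1) = lam a + lam (-p) * h"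
proof -
  have lqg: "fls_nth (lam q) (-(2*int g)) = 1" using lam_nth_even[of q g] qg by simp
  have lq0: "lam q \<noteq> 0" using lqg by auto
  define h where "h = (s - lam p) / lam q"
  have qh: "lam q * h = s - lam p" using lq0 by (simp add: h_def)
  have HE: "s = lam p + lam q * h"
  proof -
    have "lam p + lam q * h = lam p + (s - lam p)" by (simp only: qh)
    also have "\<dots> = s" by simp
    finally show ?thesis by (rule sym)
  qed
  define W where "W = h - zz"
  have qW: "lam q * W = s - lam p - lam q * zz"
  proof -
    have "lam q * W = lam q * h - lam q * zz" by (simp add: W_def right_diff_distrib)
    also have "\<dots> = s - lam p - lam q * zz" by (simp only: qh)
    finally show ?thesis .
  qed
  have qWc: "fls_nth (lam q * W) n = 0" if n: "n \<le> -2*int g" for n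
  proof -
    have s_n: "fls_nth s n = (if n = -(2*int g+1) then 1 else 0)"
      using sh n unfolding Hsh_def by auto
    have p_n: "fls_nth (lam p) n = 0"
    proof (rule lam_nth_zeroI)
      fix i assume "n = -(2*int i)" then have "i \<ge> g" using n by linarith
      then show "coeff p i = 0" using plo by auto
    qed
    have q_n: "fls_nth (lam q * zz) n = (if n = -(2*int g+1) then 1 else 0)"
    proof (cases "n = -(2*int g+1)")
      case True
      then show ?thesis using lqg by (simp add: fls_X_inv_times_conv_shift)
    next
      case False
      have "fls_nth (lam q) (n+1) = 0"
      proof (rule lam_nth_zeroI)
        fix i assume "n + 1 = -(2*int i)" then have "i > g" using n False by presburger
        then show "coeff q i = 0" using qhi by auto
      qed
      then show ?thesis using False by (simp add: fls_X_inv_times_conv_shift)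
    qed
    show ?thesis unfolding qW using s_n p_n q_n by simp
  qed
  have sdq: "fls_subdegree (lam q) = -(2*int g)"
  proof (rule fls_subdegree_eqI)
    show "fls_nth (lam q) (-(2*int g)) \<noteq> 0" using lqg by simp
    fix k assume k: "k < -(2*int g)"
    show "fls_nth (lam q) k = 0"
    proof (rule lam_nth_zeroI)
      fix i assume "k = -(2*int i)" then have "i > g" using k by linarith
      then show "coeff q i = 0" using qhi by auto
    qed
  qed
  have W0: "fls_nth W n = 0" if "n \<le> 0" for n
  proof (cases "W = 0")
    case False
    then have nz: "lam q * W \<noteq> 0" using lq0 by simp
    have "1 - 2*int g \<le> fls_subdegree (lam q * W)"
      by (rule fls_subdegree_geI[OF nz]) (simp add: qWc)
    then have "fls_subdegree W \<ge> 1" using sdq lq0 False by simp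
    then show ?thesis using that by simp
  qed simp
  have shape: "h_shape h"
  proof -
    have "fls_nth h n = fls_nth zz n" if "n \<le> 0" for n
      using W0[OF that] by (simp add: W_def)
    then show ?thesis unfolding h_shape_def by simp
  qed
  have quad: "2 * lam p * h + lam q * (h * h) = lam a"
  proof -
    have "(lam p + lam q * h)^2 = lam p * lam p + lam q * lam a"
      using sq HE by (simp add: lam_add lam_mult)
    then have "lam q * (2 * lam p * h + lam q * (h * h) - lam a) = 0"
      by (simp add: power2_eq_square algebra_simps)
    then show ?thesis using lq0 by simp
  qed
  have hs: "h * s = lam a + lam (-p) * h"
    using quad HE by (simp add: lam_uminus algebra_simps)
  have Hs_eq: "Hs h (2*g+1) = s"
  proof (rule MU_eq[OF shape])
    show "\<forall>n\<le>0. fls_nth (Hs h (2*g+1)) n = fls_nth s n"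
      using Hs_props[OF shape, of "2*g+1"] sh unfolding Hsh_def by simp
    show "inM h (Hs h (2*g+1))" using Hs_props[OF shape] by blast
    show "inM h s" unfolding inM_def using HE by blast
  qed
  have fl: "flow h (2*g+1) = 0"
    by (rule flow_zero_if_inM[OF shape]) (unfold Hs_eq hs inM_def, blast)
  have Ss_eq: "Ss h (2*g+1) = lam a + lam (-p) * h"
    using fl hs Hs_eq by (simp add: flow_def)
  show ?thesis using shape fl Hs_eq HE Ss_eq by blast
qed


definition agree :: "nat \<Rightarrow> (nat \<Rightarrow> complex) \<Rightarrow> (nat \<Rightarrow> complex) \<Rightarrow> bool" where
  "agree r c c' \<longleftrightarrow> (\<forall>l. 1 \<le> l \<longrightarrow> l \<le> r \<longrightarrow> c l = c' l)"

lemma agree_mono: "agree r c c' \<Longrightarrow> r' \<le> r \<Longrightarrow> agree r' c c'"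
  unfolding agree_def by auto

lemma agreeD: "agree r c c' \<Longrightarrow> 1 \<le> l \<Longrightarrow> l \<le> r \<Longrightarrow> c l = c' l"
  unfolding agree_def by auto

lemma agree_upd: "r < k \<Longrightarrow> agree r (c(k := x)) c"
  unfolding agree_def by auto

lemma Qf_agree: "agree (2*(g-m)-1) c c' \<Longrightarrow> Qf g c m = Qf g c' m"
proof (induction "g - m" arbitrary: m rule: less_induct)
  case less
  show ?case
  proof (cases "m < g")
    case True
    have "(\<Sum>k\<in>{m+1..g}. Qf g c k * c (2*(k-m) - 1)) = (\<Sum>k\<in>{m+1..g}. Qf g c' k * c' (2*(k-m) - 1))"
    proof (rule sum.cong)
      fix k assume k: "k \<in> {m+1..g}"
      have "Qf g c k = Qf g c' k"
        by (rule less.hyps) (use k less.prems in \<open>auto intro: agree_mono\<close>)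
      moreover have "c (2*(k-m) - 1) = c' (2*(k-m) - 1)"
        by (rule agreeD[OF less.prems]) (use k in auto)
      ultimately show "Qf g c k * c (2*(k-m) - 1) = Qf g c' k * c' (2*(k-m) - 1)" by simp
    qed simp
    then show ?thesis using True by (simp add: Qf_lt)
  next
    case False
    then show ?thesis by (cases "m = g") (auto simp: Qf_g Qf_gt)
  qed
qed

lemma Pf_agree: "agree (2*(g-m)) c c' \<Longrightarrow> Pf g c m = Pf g c' m"
  unfolding Pf_def
proof -
  assume a: "agree (2*(g-m)) c c'"
  have "(\<Sum>k\<in>{m+1..g}. Qf g c k * c (2*(k-m))) = (\<Sum>k\<in>{m+1..g}. Qf g c' k * c' (2*(k-m)))"
  proof (rule sum.cong)
    fix k assume k: "k \<in> {m+1..g}"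
    have "Qf g c k = Qf g c' k"
      by (rule Qf_agree) (use k a in \<open>auto intro: agree_mono\<close>)
    moreover have "c (2*(k-m)) = c' (2*(k-m))"
      by (rule agreeD[OF a]) (use k in auto)
    ultimately show "Qf g c k * c (2*(k-m)) = Qf g c' k * c' (2*(k-m))" by simp
  qed simp
  then show "- (\<Sum>k\<in>{m+1..g}. Qf g c k * c (2*(k-m))) = - (\<Sum>k\<in>{m+1..g}. Qf g c' k * c' (2*(k-m)))"
    by simp
qed

lemma Bf_agree: "agree (2*(g-m)) c c' \<Longrightarrow> Bf g c m = Bf g c' m"
proof (induction "g - m" arbitrary: m rule: less_induct)
  case less
  show ?case
  proof (cases "m < g")
    case True
    have "(\<Sum>k\<in>{m+1..g}. Bf g c k * c (2*(k-m) - 1)) = (\<Sum>k\<in>{m+1..g}. Bf g c' k * c' (2*(k-m) - 1))"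
    proof (rule sum.cong)
      fix k assume k: "k \<in> {m+1..g}"
      have "Bf g c k = Bf g c' k"
        by (rule less.hyps) (use k less.prems in \<open>auto intro: agree_mono\<close>)
      moreover have "c (2*(k-m) - 1) = c' (2*(k-m) - 1)"
        by (rule agreeD[OF less.prems]) (use k in auto)
      ultimately show "Bf g c k * c (2*(k-m) - 1) = Bf g c' k * c' (2*(k-m) - 1)" by simp
    qed simp
    moreover have "c (2*g - 2*m) = c' (2*g - 2*m)"
      by (rule agreeD[OF less.prems]) (use True in auto)
    ultimately show ?thesis using True by (simp add: Bf_lt)
  next
    case False
    then show ?thesis by (simp add: Bf_ge)
  qed
qed

lemma H1f_agree: "agree (2*g+1) c c' \<Longrightarrow> H1f g c = H1f g c'"
  unfolding H1f_def
proof (rule sum.cong)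
  fix k assume a: "agree (2*g+1) c c'" and k: "k \<in> {..g}"
  have "Qf g c k = Qf g c' k"
    by (rule Qf_agree) (use k a in \<open>auto intro: agree_mono\<close>)
  moreover have "c (2*k+1) = c' (2*k+1)"
    by (rule agreeD[OF a]) (use k in auto)
  ultimately show "Qf g c k * c (2*k+1) = Qf g c' k * c' (2*k+1)" by simp
qed simp

lemma Af_agree: "agree (2*g+1-2*m) c c' \<Longrightarrow> Af g c m = Af g c' m"
proof -
  assume a: "agree (2*g+1-2*m) c c'"
  have s: "(\<Sum>k\<in>{m+1..g}. Bf g c k * c (2*(k-m))) = (\<Sum>k\<in>{m+1..g}. Bf g c' k * c' (2*(k-m)))"
  proof (rule sum.cong)
    fix k assume k: "k \<in> {m+1..g}"
    have "Bf g c k = Bf g c' k"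
      by (rule Bf_agree) (use k a in \<open>auto intro: agree_mono\<close>)
    moreover have "c (2*(k-m)) = c' (2*(k-m))"
      by (rule agreeD[OF a]) (use k in auto)
    ultimately show "Bf g c k * c (2*(k-m)) = Bf g c' k * c' (2*(k-m))" by simp
  qed simp
  have c1: "m \<le> g \<Longrightarrow> c (2*g+1-2*m) = c' (2*g+1-2*m)"
    by (rule agreeD[OF a]) auto
  have h1: "m = 0 \<Longrightarrow> H1f g c = H1f g c'"
    using a by (intro H1f_agree) simp
  show ?thesis unfolding Af_def using s c1 h1 by auto
qed

lemma Qf_split: "m < g \<Longrightarrow> Qf g c m = - c (2*(g-m)-1) - (\<Sum>k\<in>{m+1..<g}. Qf g c k * c (2*(k-m)-1))"
proof -
  assume m: "m < g"
  have "{m+1..g} = insert g {m+1..<g}" using m by auto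
  then show ?thesis using m by (simp add: Qf_lt Qf_g)
qed

lemma Pf_split: "m < g \<Longrightarrow> Pf g c m = - c (2*(g-m)) - (\<Sum>k\<in>{m+1..<g}. Qf g c k * c (2*(k-m)))"
proof -
  assume m: "m < g"
  have "{m+1..g} = insert g {m+1..<g}" using m by auto
  then show ?thesis using m by (simp add: Pf_def Qf_g)
qed

lemma H1f_split: "H1f g c = c (2*g+1) + (\<Sum>k<g. Qf g c k * c (2*k+1))"
proof -
  have "{..g} = insert g {..<g}" by auto
  then show ?thesis by (simp add: H1f_def Qf_g)
qed

lemma coords_from_QP:
  assumes Q: "\<forall>m. Qf g c m = Qf g c' m" and P: "\<forall>m. Pf g c m = Pf g c' m"
  shows "agree (2*g) c c'"
proof -
  have "c l = c' l" if "1 \<le> l" "l \<le> 2*g" for l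
    using that
  proof (induction l rule: less_induct)
    case (less l)
    show ?case
    proof (cases "even l")
      case False
      then obtain i where l: "l = 2*i+1" by (metis oddE)
      define m where "m = g - i - 1"
      have mg: "m < g" "2*(g-m)-1 = l" using less.prems l by (auto simp: m_def)
      have S: "(\<Sum>k\<in>{m+1..<g}. Qf g c k * c (2*(k-m)-1)) = (\<Sum>k\<in>{m+1..<g}. Qf g c' k * c' (2*(k-m)-1))"
      proof (rule sum.cong)
        fix k assume k: "k \<in> {m+1..<g}"
        have "c (2*(k-m)-1) = c' (2*(k-m)-1)"
          by (rule less.IH) (use k mg in auto)
        then show "Qf g c k * c (2*(k-m)-1) = Qf g c' k * c' (2*(k-m)-1)" using Q by simp
      qed simp
      have "Qf g c m = Qf g c' m" using Q by simp
      then have "c (2*(g-m)-1) = c' (2*(g-m)-1)" using Qf_split[OF mg(1), of c] Qf_split[OF mg(1), of c'] S by simp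
      then show ?thesis using mg by simp
    next
      case True
      then obtain i where l: "l = 2*i" by (metis evenE)
      define m where "m = g - i"
      have mg: "m < g" "2*(g-m) = l" using less.prems l by (auto simp: m_def)
      have S: "(\<Sum>k\<in>{m+1..<g}. Qf g c k * c (2*(k-m))) = (\<Sum>k\<in>{m+1..<g}. Qf g c' k * c' (2*(k-m)))"
      proof (rule sum.cong)
        fix k assume k: "k \<in> {m+1..<g}"
        have "c (2*(k-m)) = c' (2*(k-m))"
          by (rule less.IH) (use k mg in auto)
        then show "Qf g c k * c (2*(k-m)) = Qf g c' k * c' (2*(k-m))" using Q by simp
      qed simp
      have "Pf g c m = Pf g c' m" using P by simp
      then have "c (2*(g-m)) = c' (2*(g-m))" using Pf_split[OF mg(1), of c] Pf_split[OF mg(1), of c'] S by simp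
      then show ?thesis using mg by simp
    qed
  qed
  then show ?thesis unfolding agree_def by blast
qed

definition polyOf :: "(nat \<Rightarrow> complex) \<Rightarrow> nat \<Rightarrow> complex poly" where
  "polyOf f n = Poly (map f [0..<n])"

lemma coeff_polyOf: "coeff (polyOf f n) m = (if m < n then f m else 0)"
  by (simp add: polyOf_def nth_default_def)

lemma exists_h:
  assumes g: "g \<ge> 1"
  shows "\<exists>h p q a. h \<in> Mkdv g \<and> agree (2*g+1) c (\<lambda>l. fls_nth h (int l)) \<and>
     Hs h (2*g+1) = lam p + lam q * h \<and> Ss h (2*g+1) = lam a + lam (-p) * h \<and>
     (\<forall>i>g. coeff (p*p + q*a) i = (if i = 2*g+1 then 1 else 0))"
proof -
  define q where "q = polyOf (Qf g c) (g+1)"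
  define p where "p = polyOf (Pf g c) (g+1)"
  have cq: "coeff q m = Qf g c m" for m
    by (simp add: q_def coeff_polyOf Qf_gt)
  have cp: "coeff p m = Pf g c m" for m
    by (simp add: p_def coeff_polyOf Pf_ge)
  have qg: "coeff q g = 1" by (simp add: cq Qf_g)
  have qhi: "\<forall>i>g. coeff q i = 0" by (simp add: cq Qf_gt)
  have plo: "\<forall>i\<ge>g. coeff p i = 0" by (simp add: cp Pf_ge)
  have q0: "q \<noteq> 0" using qg by auto
  have degq: "degree q = g"
  proof (rule antisym)
    show "degree q \<le> g" by (rule degree_le) (use qhi in auto)
    show "g \<le> degree q" by (rule le_degree) (simp add: qg)
  qed
  define M where "M = monom 1 (2*g+1) - p*p"
  define d where "d = M div q"
  define rr where "rr = M mod q"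
  have dm: "M = q * d + rr" unfolding d_def rr_def by (metis div_mult_mod_eq mult.commute)
  have rr0: "coeff rr i = 0" if "g \<le> i" for i
  proof -
    have "rr = 0 \<or> degree rr < degree q" unfolding rr_def using degree_mod_less[OF q0] by simp
    then show ?thesis using that degq by (auto simp: coeff_eq_0)
  qed
  define S1 where "S1 = (\<Sum>k<g. Qf g c k * c (2*k+1))"
  define S2 where "S2 = (\<Sum>k\<in>{1..g}. Pf g c k * c (2*k))"
  define \<alpha> where "\<alpha> = 2 * c (2*g+1) + S1 + S2 - coeff d 0"
  define a where "a = d + [:\<alpha>:]"
  have a0: "coeff a 0 = 2 * c (2*g+1) + S1 + S2" by (simp add: a_def \<alpha>_def)
  have Req: "p*p + q*a = monom 1 (2*g+1) - rr + smult \<alpha> q"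
  proof -
    have "p*p + q*a = p*p + q*d + q*[:\<alpha>:]" by (simp add: a_def algebra_simps)
    also have "q*[:\<alpha>:] = smult \<alpha> q" by (simp add: mult.commute)
    also have "p*p + q*d = monom 1 (2*g+1) - rr" using dm by (simp add: M_def algebra_simps)
    finally show ?thesis .
  qed
  have Rhi: "\<forall>i>g. coeff (p*p + q*a) i = (if i = 2*g+1 then 1 else 0)"
    using rr0 qhi unfolding Req by (auto simp: coeff_monom)
  obtain s where sq: "s^2 = lam (p*p + q*a)" and sh: "Hsh s (2*g+1)"
    using sqrt_exists[OF Rhi] by blast
  obtain h where shape: "h_shape h" and fl: "flow h (2*g+1) = 0"
      and HE: "Hs h (2*g+1) = lam p + lam q * h" and SE: "Ss h (2*g+1) = lam a + lam (-p) * h"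
    using h_from_s[OF g sq sh qg qhi plo] by blast
  define c' where "c' = (\<lambda>l. fls_nth h (int l))"
  have rep: "(\<forall>m. coeff q m = Qf g c' m) \<and> (\<forall>m. coeff p m = Pf g c' m)"
    using Hrep[OF shape HE] unfolding c'_def by blast
  have ag: "agree (2*g) c c'"
    by (rule coords_from_QP) (use rep cq cp in auto)
  have srep: "(\<forall>m. coeff (-p) m = Bf g c' m) \<and> (\<forall>m. coeff a m = Af g c' m)"
    using Srep[OF shape HE SE] unfolding c'_def by blast
  have "coeff a 0 = Af g c' 0" using srep by blast
  also have "\<dots> = c' (2*g+1) + H1f g c' - (\<Sum>k\<in>{1..g}. Bf g c' k * c' (2*k))"
    unfolding Af_def by simp
  also have "H1f g c' = c' (2*g+1) + S1"
  proof -
    have "(\<Sum>k<g. Qf g c' k * c' (2*k+1)) = S1" unfolding S1_def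
    proof (rule sum.cong)
      fix k assume k: "k \<in> {..<g}"
      have "c' (2*k+1) = c (2*k+1)" using agreeD[OF ag, of "2*k+1"] k by auto
      then show "Qf g c' k * c' (2*k+1) = Qf g c k * c (2*k+1)" using rep cq by simp
    qed simp
    then show ?thesis by (simp add: H1f_split)
  qed
  also have "(\<Sum>k\<in>{1..g}. Bf g c' k * c' (2*k)) = - S2" unfolding S2_def
  proof -
    have "(\<Sum>k\<in>{1..g}. Bf g c' k * c' (2*k)) = (\<Sum>k\<in>{1..g}. - (Pf g c k * c (2*k)))"
    proof (rule sum.cong)
      fix k assume k: "k \<in> {1..g}"
      have "c' (2*k) = c (2*k)" using agreeD[OF ag, of "2*k"] k by auto
      moreover have "Bf g c' k = - Pf g c k" using srep cp by (metis coeff_minus)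
      ultimately show "Bf g c' k * c' (2*k) = - (Pf g c k * c (2*k))" by simp
    qed simp
    then show "(\<Sum>k\<in>{1..g}. Bf g c' k * c' (2*k)) = - (\<Sum>k\<in>{1..g}. Pf g c k * c (2*k))"
      by (simp add: sum_negf)
  qed
  finally have "c' (2*g+1) = c (2*g+1)" using a0 by simp
  then have ag2: "agree (2*g+1) c c'"
    using ag unfolding agree_def by (metis le_Suc_eq add.commute plus_1_eq_Suc)
  show ?thesis
    using shape fl HE SE Rhi ag2 unfolding Mkdv_def c'_def by blast
qed


lemma two_ne_one: "(2::2) \<noteq> 1"
  by simp

lemma mat2_nth [simp]: "mat2 a b c d $ 1 $ 1 = a" "mat2 a b c d $ 1 $ 2 = b"
  "mat2 a b c d $ 2 $ 1 = c" "mat2 a b c d $ 2 $ 2 = d"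
  by (simp_all add: mat2_def two_ne_one)

lemma mat2_eq: "mat2 a b c d = mat2 a' b' c' d' \<longleftrightarrow> a = a' \<and> b = b' \<and> c = c' \<and> d = d'"
proof
  assume e: "mat2 a b c d = mat2 a' b' c' d'"
  show "a = a' \<and> b = b' \<and> c = c' \<and> d = d'"
    using arg_cong[OF e, of "\<lambda>M. vec_nth (vec_nth M 1) 1"] arg_cong[OF e, of "\<lambda>M. vec_nth (vec_nth M 1) 2"]
      arg_cong[OF e, of "\<lambda>M. vec_nth (vec_nth M 2) 1"] arg_cong[OF e, of "\<lambda>M. vec_nth (vec_nth M 2) 2"] by simp
qed simp

definition PM :: "nat \<Rightarrow> (nat \<Rightarrow> complex) \<Rightarrow> pmat" where
  "PM g c = (\<lambda>i. mat2 (Pf g c i) (Qf g c i) (Af g c i) (Bf g c i))"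

definition coords :: "complex fls \<Rightarrow> nat \<Rightarrow> complex" where
  "coords h = (\<lambda>l. fls_nth h (int l))"

lemma PM_agree: "agree (2*g+1) c c' \<Longrightarrow> PM g c = PM g c'"
proof -
  assume a: "agree (2*g+1) c c'"
  have "Pf g c i = Pf g c' i" "Qf g c i = Qf g c' i" "Af g c i = Af g c' i" "Bf g c i = Bf g c' i" for i
    by (rule Pf_agree Qf_agree Af_agree Bf_agree; rule agree_mono[OF a]; simp)+
  then show ?thesis unfolding PM_def by simp
qed

lemma Vmat_rep:
  assumes h: "h \<in> Mkdv g"
  shows "Vmat (2*g+1) h = PM g (coords h)"
proof -
  have shape: "h_shape h" using h by (simp add: Mkdv_def)
  obtain p q where HE: "Hs h (2*g+1) = lam p + lam q * h"
    using Hs_props[OF shape] unfolding inM_def by blast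
  obtain a b where SE: "Ss h (2*g+1) = lam a + lam b * h"
    using Ss_props[OF shape] unfolding inM_def by blast
  have r1: "(\<forall>m. coeff q m = Qf g (coords h) m) \<and> (\<forall>m. coeff p m = Pf g (coords h) m)"
    using Hrep[OF shape HE] unfolding coords_def by blast
  have r2: "(\<forall>m. coeff b m = Bf g (coords h) m) \<and> (\<forall>m. coeff a m = Af g (coords h) m)"
    using Srep[OF shape HE SE] unfolding coords_def by blast
  show ?thesis
    unfolding Vmat_def PM_def Let_def decomp_eq[OF shape HE] decomp_eq[OF shape SE]
    using r1 r2 by simp
qed

lemma lamq_top:
  assumes h: "h_shape h" and qg: "coeff q g = 1" and qhi: "\<forall>i>g. coeff q i = 0"
  shows "fls_nth (lam q * h) (-(2*int g+1)) = 1"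
proof -
  have dq: "degree q \<le> g" by (rule degree_le) (use qhi in auto)
  show ?thesis using lamh_odd[OF h dq order.refl] qg by simp
qed

lemma uniq:
  assumes h: "h \<in> Mkdv g" and h': "h' \<in> Mkdv g" and ag: "agree (2*g+1) (coords h) (coords h')"
  shows "h = h'"
proof -
  have shape: "h_shape h" and fl: "flow h (2*g+1) = 0" using h by (auto simp: Mkdv_def)
  have shape': "h_shape h'" and fl': "flow h' (2*g+1) = 0" using h' by (auto simp: Mkdv_def)
  obtain p q where HE: "Hs h (2*g+1) = lam p + lam q * h"
    using Hs_props[OF shape] unfolding inM_def by blast
  obtain a b where SE: "Ss h (2*g+1) = lam a + lam b * h"
    using Ss_props[OF shape] unfolding inM_def by blast
  obtain p' q' where HE': "Hs h' (2*g+1) = lam p' + lam q' * h'"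
    using Hs_props[OF shape'] unfolding inM_def by blast
  obtain a' b' where SE': "Ss h' (2*g+1) = lam a' + lam b' * h'"
    using Ss_props[OF shape'] unfolding inM_def by blast
  have r1: "(\<forall>m. coeff q m = Qf g (coords h) m) \<and> (\<forall>m. coeff p m = Pf g (coords h) m)"
    using Hrep[OF shape HE] unfolding coords_def by blast
  have r2: "(\<forall>m. coeff b m = Bf g (coords h) m) \<and> (\<forall>m. coeff a m = Af g (coords h) m)"
    using Srep[OF shape HE SE] unfolding coords_def by blast
  have r1': "(\<forall>m. coeff q' m = Qf g (coords h') m) \<and> (\<forall>m. coeff p' m = Pf g (coords h') m)"
    using Hrep[OF shape' HE'] unfolding coords_def by blast
  have r2': "(\<forall>m. coeff b' m = Bf g (coords h') m) \<and> (\<forall>m. coeff a' m = Af g (coords h') m)"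
    using Srep[OF shape' HE' SE'] unfolding coords_def by blast
  have PMe: "PM g (coords h) = PM g (coords h')" by (rule PM_agree[OF ag])
  have "Pf g (coords h) i = Pf g (coords h') i \<and> Qf g (coords h) i = Qf g (coords h') i \<and>
        Af g (coords h) i = Af g (coords h') i \<and> Bf g (coords h) i = Bf g (coords h') i" for i
    using fun_cong[OF PMe, of i] unfolding PM_def mat2_eq by simp
  then have pp: "p' = p" "q' = q" "a' = a" "b' = b"
    using r1 r2 r1' r2' by (auto intro!: poly_eqI)
  have e1: "h * (lam p + lam q * h) = lam a + lam b * h" using fl HE SE by (simp add: flow_def)
  have e2: "h' * (lam p + lam q * h') = lam a + lam b * h'" using fl' HE' SE' pp by (simp add: flow_def)
  have "(h - h') * (lam q * (h + h') + lam p - lam b) = 0"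
    using e1 e2 by (simp add: algebra_simps)
  moreover have "lam q * (h + h') + lam p - lam b \<noteq> 0"
  proof -
    have qg: "coeff q g = 1" using r1 by (simp add: Qf_g)
    have qhi: "\<forall>i>g. coeff q i = 0" using r1 by (simp add: Qf_gt)
    have "fls_nth (lam q * (h + h') + lam p - lam b) (-(2*int g+1)) = 2"
      using lamq_top[OF shape qg qhi] lamq_top[OF shape' qg qhi] lam_nth_odd[of p g] lam_nth_odd[of b g]
      by (simp add: distrib_left)
    then show ?thesis by (metis fls_zero_nth zero_neq_numeral)
  qed
  ultimately show ?thesis by simp
qed

lemma Vcoord_rep:
  assumes g: "g \<ge> 1"
  shows "Vcoord g c = PM g c"
proof -
  obtain h p q a where h: "h \<in> Mkdv g" and ag: "agree (2*g+1) c (coords h)"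
    using exists_h[OF g, of c] unfolding coords_def by blast
  have "(THE h'. h' \<in> Mkdv g \<and> (\<forall>l\<in>{1..2*g+1}. fls_nth h' (int l) = c l)) = h"
  proof (rule the_equality)
    show "h \<in> Mkdv g \<and> (\<forall>l\<in>{1..2*g+1}. fls_nth h (int l) = c l)"
      using h ag unfolding agree_def coords_def by auto
    fix h' assume h': "h' \<in> Mkdv g \<and> (\<forall>l\<in>{1..2*g+1}. fls_nth h' (int l) = c l)"
    have "agree (2*g+1) (coords h') (coords h)"
      using h' ag unfolding agree_def coords_def by auto
    then show "h' = h" using uniq h h' by blast
  qed
  then have "Vcoord g c = Vmat (2*g+1) h" by (simp add: Vcoord_def)
  also have "\<dots> = PM g (coords h)" by (rule Vmat_rep[OF h])
  also have "\<dots> = PM g c" using PM_agree[OF ag] by simp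
  finally show ?thesis .
qed

lemma Vcoord_coords:
  assumes g: "g \<ge> 1" and h: "h \<in> Mkdv g"
  shows "Vcoord g (coords h) = PM g (coords h)"
  using Vcoord_rep[OF g] by simp

lemma PB_sum: "g \<ge> 1 \<Longrightarrow> Pf g c i + Bf g c i = 0"
proof -
  assume g: "g \<ge> 1"
  obtain h p q a where h: "h \<in> Mkdv g" and ag: "agree (2*g+1) c (coords h)"
    and HE: "Hs h (2*g+1) = lam p + lam q * h" and SE: "Ss h (2*g+1) = lam a + lam (-p) * h"
    using exists_h[OF g, of c] unfolding coords_def by blast
  have shape: "h_shape h" using h by (simp add: Mkdv_def)
  have r1: "\<forall>m. coeff p m = Pf g (coords h) m"
    using Hrep[OF shape HE] unfolding coords_def by blast
  have r2: "\<forall>m. coeff (-p) m = Bf g (coords h) m"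
    using Srep[OF shape HE SE] unfolding coords_def by blast
  have "Pf g (coords h) i + Bf g (coords h) i = 0" using r1 r2 by (metis add.right_inverse coeff_minus)
  moreover have "Pf g c i = Pf g (coords h) i" by (rule Pf_agree, rule agree_mono[OF ag]) simp
  moreover have "Bf g c i = Bf g (coords h) i" by (rule Bf_agree, rule agree_mono[OF ag]) simp
  ultimately show ?thesis by simp
qed


definition ent_tr :: "complex^2^2 \<Rightarrow> complex^2^2 \<Rightarrow> complex" where
  "ent_tr M N = vec_nth (vec_nth M 1) 1 * vec_nth (vec_nth N 1) 1 + vec_nth (vec_nth M 1) 2 * vec_nth (vec_nth N 2) 1
     + vec_nth (vec_nth M 2) 1 * vec_nth (vec_nth N 1) 2 + vec_nth (vec_nth M 2) 2 * vec_nth (vec_nth N 2) 2"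

lemma trace2: "trace (M::complex^2^2) = vec_nth (vec_nth M 1) 1 + vec_nth (vec_nth M 2) 2"
  by (simp add: trace_def sum_2)

lemma trace_mult2: "trace (M ** N) = ent_tr M N"
  by (simp add: trace2 matrix_matrix_mult_def sum_2 ent_tr_def)

lemma trace_sum2: "trace (\<Sum>a\<in>A. f a :: complex^2^2) = (\<Sum>a\<in>A. trace (f a))"
  by (simp add: trace2 sum.distrib)

lemma Hc_alt: "Hc X i = (1/2) * (\<Sum>a\<le>i. ent_tr (X a) (X (i-a)))"
  by (simp add: Hc_def trace_sum2 trace_mult2)

definition bil :: "pmat \<Rightarrow> pmat \<Rightarrow> nat \<Rightarrow> complex" where
  "bil X Y i = (1/2) * (\<Sum>a\<le>i. ent_tr (Y a) (X (i-a)) + ent_tr (X a) (Y (i-a)))"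

lemma prod_deriv:
  fixes f g :: "complex \<Rightarrow> complex"
  assumes "(f has_field_derivative Df) (at 0)" "(g has_field_derivative Dg) (at 0)"
  shows "((\<lambda>t. f t * g t) has_field_derivative (Df * g 0 + f 0 * Dg)) (at 0)"
  using DERIV_mult[OF assms] by (simp add: mult.commute)

lemma ent_tr_deriv:
  assumes A: "\<And>r s. ((\<lambda>t. vec_nth (vec_nth (A t) r) s) has_field_derivative vec_nth (vec_nth A' r) s) (at 0)"
    and B: "\<And>r s. ((\<lambda>t. vec_nth (vec_nth (B t) r) s) has_field_derivative vec_nth (vec_nth B' r) s) (at 0)"
  shows "((\<lambda>t. ent_tr (A t) (B t)) has_field_derivative (ent_tr A' (B 0) + ent_tr (A 0) B')) (at 0)"
proof -
  have "((\<lambda>t. ent_tr (A t) (B t)) has_field_derivative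
      (vec_nth (vec_nth A' 1) 1 * vec_nth (vec_nth (B 0) 1) 1 + vec_nth (vec_nth (A 0) 1) 1 * vec_nth (vec_nth B' 1) 1) +
      (vec_nth (vec_nth A' 1) 2 * vec_nth (vec_nth (B 0) 2) 1 + vec_nth (vec_nth (A 0) 1) 2 * vec_nth (vec_nth B' 2) 1) +
      (vec_nth (vec_nth A' 2) 1 * vec_nth (vec_nth (B 0) 1) 2 + vec_nth (vec_nth (A 0) 2) 1 * vec_nth (vec_nth B' 1) 2) +
      (vec_nth (vec_nth A' 2) 2 * vec_nth (vec_nth (B 0) 2) 2 + vec_nth (vec_nth (A 0) 2) 2 * vec_nth (vec_nth B' 2) 2)) (at 0)"
    unfolding ent_tr_def by (intro DERIV_add prod_deriv A B)
  then show ?thesis by (simp add: ent_tr_def algebra_simps)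
qed

lemma Hc_deriv:
  assumes d: "\<And>a r s. ((\<lambda>t. vec_nth (vec_nth (G t a) r) s) has_field_derivative vec_nth (vec_nth (G' a) r) s) (at 0)"
  shows "((\<lambda>t. Hc (G t) i) has_field_derivative bil (G 0) G' i) (at 0)"
  unfolding Hc_alt bil_def
  by (intro DERIV_cmult DERIV_sum ent_tr_deriv d)

lemma msc_nth [simp]: "vec_nth (vec_nth (msc t M) r) s = t * vec_nth (vec_nth M r) s"
  by (simp add: msc_def)

lemma msc_0 [simp]: "msc 0 M = 0"
  by (simp add: msc_def vec_eq_iff)

lemma TStilde_char:
  "Y \<in> TStilde g X \<longleftrightarrow> (\<forall>i>g. Y i = 0) \<and> (\<forall>i. trace (Y i) = 0) \<and> (\<forall>i\<in>{g+1..2*g+1}. bil X Y i = 0)"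
proof -
  have D: "((\<lambda>t. Hc (\<lambda>m. X m + msc t (Y m)) i) has_field_derivative bil X Y i) (at 0)" for i
  proof -
    have "((\<lambda>t. Hc (\<lambda>m. X m + msc t (Y m)) i) has_field_derivative bil (\<lambda>m. X m + msc 0 (Y m)) Y i) (at 0)"
    proof (rule Hc_deriv)
      fix a r s
      have e: "(\<lambda>t. vec_nth (vec_nth (X a + msc t (Y a)) r) s) =
          (\<lambda>t. vec_nth (vec_nth (X a) r) s + vec_nth (vec_nth (Y a) r) s * t)"
        by (simp add: mult.commute)
      have "((\<lambda>t. vec_nth (vec_nth (X a) r) s + vec_nth (vec_nth (Y a) r) s * t) has_field_derivative
          0 + vec_nth (vec_nth (Y a) r) s) (at 0)"
        by (intro DERIV_add DERIV_const DERIV_cmult_Id)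
      then show "((\<lambda>t. vec_nth (vec_nth (X a + msc t (Y a)) r) s) has_field_derivative vec_nth (vec_nth (Y a) r) s) (at 0)"
        unfolding e by simp
    qed
    then show ?thesis by simp
  qed
  have "((\<lambda>t. Hc (\<lambda>m. X m + msc t (Y m)) i) has_field_derivative 0) (at 0) \<longleftrightarrow> bil X Y i = 0" for i
  proof
    assume "((\<lambda>t. Hc (\<lambda>m. X m + msc t (Y m)) i) has_field_derivative 0) (at 0)"
    then show "bil X Y i = 0" using DERIV_unique[OF D[of i]] by blast
  next
    assume "bil X Y i = 0"
    then show "((\<lambda>t. Hc (\<lambda>m. X m + msc t (Y m)) i) has_field_derivative 0) (at 0)" using D[of i] by simp
  qed
  then show ?thesis unfolding TStilde_def by auto
qed

lemma ent_tr_lin1: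
  assumes "\<And>r s. vec_nth (vec_nth M r) s = (\<Sum>k\<in>K. w k * vec_nth (vec_nth (Z k) r) s)"
  shows "ent_tr M N = (\<Sum>k\<in>K. w k * ent_tr (Z k) N)"
  unfolding ent_tr_def assms by (simp add: sum_distrib_left sum_distrib_right sum.distrib algebra_simps)

lemma ent_tr_lin2:
  assumes "\<And>r s. vec_nth (vec_nth M r) s = (\<Sum>k\<in>K. w k * vec_nth (vec_nth (Z k) r) s)"
  shows "ent_tr N M = (\<Sum>k\<in>K. w k * ent_tr N (Z k))"
  unfolding ent_tr_def assms by (simp add: sum_distrib_left sum_distrib_right sum.distrib algebra_simps)

lemma bil_lin:
  assumes "\<And>a r s. vec_nth (vec_nth (Y a) r) s = (\<Sum>k\<in>K. w k * vec_nth (vec_nth (Z k a) r) s)"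
  shows "bil X Y i = (\<Sum>k\<in>K. w k * bil X (Z k) i)"
proof -
  have "bil X Y i = (1/2) * (\<Sum>a\<le>i. \<Sum>k\<in>K. w k * (ent_tr (Z k a) (X (i-a)) + ent_tr (X a) (Z k (i-a))))"
    unfolding bil_def
    by (simp add: ent_tr_lin1[OF assms] ent_tr_lin2[OF assms] sum.distrib algebra_simps)
  also have "\<dots> = (\<Sum>k\<in>K. w k * bil X (Z k) i)"
    unfolding bil_def by (subst sum.swap) (simp add: sum_distrib_left sum_distrib_right algebra_simps)
  finally show ?thesis .
qed

lemma Amat_nth [simp]: "vec_nth (vec_nth Amat 1) 1 = 0" "vec_nth (vec_nth Amat 1) 2 = 0"
  "vec_nth (vec_nth Amat 2) 1 = 1" "vec_nth (vec_nth Amat 2) 2 = 0"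
  by (simp_all add: Amat_def)

lemma Efield_nth:
  "vec_nth (vec_nth (Efield X i) 1) 1 = - vec_nth (vec_nth (X i) 1) 2"
  "vec_nth (vec_nth (Efield X i) 1) 2 = 0"
  "vec_nth (vec_nth (Efield X i) 2) 1 = vec_nth (vec_nth (X i) 1) 1 - vec_nth (vec_nth (X i) 2) 2"
  "vec_nth (vec_nth (Efield X i) 2) 2 = vec_nth (vec_nth (X i) 1) 2"
  by (simp_all add: Efield_def matrix_matrix_mult_def sum_2)

lemma bil_E: "bil X (Efield X) i = 0"
proof -
  have "ent_tr (Efield X a) (X b) + ent_tr (X a) (Efield X b) = 0" for a b
    by (simp add: ent_tr_def Efield_nth algebra_simps)
  then show ?thesis unfolding bil_def by simp
qed

lemma sum_reflect:
  fixes f :: "nat \<Rightarrow> nat \<Rightarrow> 'a::comm_monoid_add" and i :: nat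
  shows "(\<Sum>a\<le>i. f a (i-a)) = (\<Sum>a\<le>i. f (i-a) a)"
proof -
  have "(\<Sum>a\<le>i. f (i-a) a) = (\<Sum>a<Suc i. (\<lambda>b. f b (i-b)) (Suc i - Suc a))"
    by (rule sum.cong) (auto simp: lessThan_Suc_atMost)
  also have "\<dots> = (\<Sum>a<Suc i. f a (i-a))" by (rule sum.nat_diff_reindex)
  finally show ?thesis by (simp add: lessThan_Suc_atMost)
qed

lemma Y_zero:
  assumes XA: "X (g+1) = Amat" and Xhi: "\<forall>i>g+1. X i = 0"
    and Yhi: "\<forall>i>g. Y i = 0"
    and Y0: "\<forall>i\<le>g. vec_nth (vec_nth (Y i) 1) 1 = 0 \<and> vec_nth (vec_nth (Y i) 2) 1 = 0 \<and> vec_nth (vec_nth (Y i) 2) 2 = 0"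
    and B: "\<forall>i\<in>{g+1..2*g+1}. bil X Y i = 0"
  shows "Y = (\<lambda>i. 0)"
proof -
  define y where "y i = vec_nth (vec_nth (Y i) 1) 2" for i
  define x where "x i = vec_nth (vec_nth (X i) 2) 1" for i
  have Yall: "vec_nth (vec_nth (Y i) 1) 1 = 0 \<and> vec_nth (vec_nth (Y i) 2) 1 = 0 \<and> vec_nth (vec_nth (Y i) 2) 2 = 0" for i
    using Y0 Yhi by (cases "i \<le> g") auto
  have e1: "ent_tr (Y a) N = y a * vec_nth (vec_nth N 2) 1" for a N
    using Yall[of a] by (simp add: ent_tr_def y_def)
  have e2: "ent_tr N (Y a) = vec_nth (vec_nth N 2) 1 * y a" for a N
    using Yall[of a] by (simp add: ent_tr_def y_def)
  have bilx: "bil X Y i = (\<Sum>a\<le>i. x a * y (i-a))" for i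
  proof -
    have "bil X Y i = (1/2) * ((\<Sum>a\<le>i. y a * x (i-a)) + (\<Sum>a\<le>i. x a * y (i-a)))"
      unfolding bil_def e1 e2 by (simp add: x_def sum.distrib)
    also have "(\<Sum>a\<le>i. y a * x (i-a)) = (\<Sum>a\<le>i. x a * y (i-a))"
      using sum_reflect[of "\<lambda>a b. y a * x b" i] by (simp add: mult.commute)
    finally show ?thesis by simp
  qed
  have x1: "x (g+1) = 1" using XA by (simp add: x_def)
  have x0: "x a = 0" if "a > g+1" for a using Xhi that by (simp add: x_def)
  have y0: "y m = 0" if "m \<le> g" for m
    using that
  proof (induction "g - m" arbitrary: m rule: less_induct)
    case less
    define i where "i = g + 1 + m"
    have "(\<Sum>a\<le>i. x a * y (i-a)) = (\<Sum>a\<le>i. if a = g+1 then y m else 0)"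
    proof (rule sum.cong)
      fix a assume a: "a \<in> {..i}"
      show "x a * y (i-a) = (if a = g+1 then y m else 0)"
      proof (cases "a = g+1")
        case True then show ?thesis using x1 by (simp add: i_def)
      next
        case False
        show ?thesis
        proof (cases "a > g+1")
          case True then show ?thesis using x0 False by simp
        next
          case False': False
          show ?thesis
          proof (cases "i - a > g")
            case True then have "y (i-a) = 0" using Yhi by (simp add: y_def)
            then show ?thesis using False by simp
          next
            case False'': False
            then have "y (i-a) = 0" using less False False' a by (intro less.hyps) (auto simp: i_def)
            then show ?thesis using False by simp
          qed
        qed
      qed
    qed simp
    also have "\<dots> = y m" by (simp add: i_def)
    finally have "bil X Y i = y m" using bilx by simp
    moreover have "bil X Y i = 0" using B less.prems by (simp add: i_def)
    ultimately show ?case by simp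
  qed
  show ?thesis
  proof
    fix i
    show "Y i = 0"
    proof (cases "i \<le> g")
      case True
      then show ?thesis using Yall[of i] y0[OF True]
        by (simp add: vec_eq_iff forall_2 y_def)
    qed (use Yhi in auto)
  qed
qed


lemma mat2_zero: "mat2 0 0 0 (0::complex) = 0"
  by (simp add: vec_eq_iff forall_2)

lemma ent_tr_mat2: "ent_tr (mat2 a b c d) (mat2 a' b' c' d') = a*a' + b*c' + c*b' + d*d'"
  by (simp add: ent_tr_def)

lemma Af_hi: "g + 1 < i \<Longrightarrow> Af g c i = 0"
  by (simp add: Af_def)

lemma Af_top: "Af g c (g+1) = 1"
  by (simp add: Af_def)

lemma PM_Stilde:
  assumes g: "g \<ge> 1"
  shows "PM g c \<in> Stilde g"
proof -
  obtain h p q a where h: "h \<in> Mkdv g" and ag: "agree (2*g+1) c (coords h)"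
    and HE: "Hs h (2*g+1) = lam p + lam q * h" and SE: "Ss h (2*g+1) = lam a + lam (-p) * h"
    and Rhi: "\<forall>i>g. coeff (p*p + q*a) i = (if i = 2*g+1 then 1 else 0)"
    using exists_h[OF g, of c] unfolding coords_def by blast
  have shape: "h_shape h" using h by (simp add: Mkdv_def)
  have r1: "(\<forall>m. coeff q m = Qf g (coords h) m) \<and> (\<forall>m. coeff p m = Pf g (coords h) m)"
    using Hrep[OF shape HE] unfolding coords_def by blast
  have r2: "\<forall>m. coeff a m = Af g (coords h) m"
    using Srep[OF shape HE SE] unfolding coords_def by blast
  have PMe: "PM g c = PM g (coords h)" by (rule PM_agree[OF ag])
  have cp: "Pf g c m = coeff p m" and cq: "Qf g c m = coeff q m" and ca: "Af g c m = coeff a m"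
    and cb: "Bf g c m = - coeff p m" for m
  proof -
    have "Pf g c m = Pf g (coords h) m \<and> Qf g c m = Qf g (coords h) m \<and> Af g c m = Af g (coords h) m"
      using fun_cong[OF PMe, of m] unfolding PM_def mat2_eq by simp
    then show "Pf g c m = coeff p m" "Qf g c m = coeff q m" "Af g c m = coeff a m"
      using r1 r2 by auto
    then show "Bf g c m = - coeff p m" using PB_sum[OF g, of c m] by (simp add: eq_neg_iff_add_eq_0 add.commute)
  qed
  have MA: "PM g c \<in> MA g"
    unfolding MA_def
  proof (intro CollectI conjI allI impI)
    show "PM g c (g+1) = Amat"
      using Af_top[of g c] by (simp add: PM_def Pf_ge Qf_gt Bf_ge Amat_def)
    fix i
    show "trace (PM g c i) = 0" if "i \<le> g"
      using PB_sum[OF g, of c i] by (simp add: PM_def trace2)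
    show "PM g c i = 0" if "g + 1 < i"
      using that by (simp add: PM_def Pf_ge Qf_gt Bf_ge Af_hi mat2_zero)
  qed
  have Hc: "Hc (PM g c) i = coeff (p*p + q*a) i" for i
  proof -
    have "(\<Sum>k\<le>i. ent_tr (PM g c k) (PM g c (i-k))) =
        (\<Sum>k\<le>i. 2 * (coeff p k * coeff p (i-k)) + coeff q k * coeff a (i-k) + coeff a k * coeff q (i-k))"
      by (rule sum.cong) (simp_all add: PM_def ent_tr_mat2 cp cq ca cb)
    also have "\<dots> = 2 * coeff (p*p) i + coeff (q*a) i + coeff (a*q) i"
      by (simp add: coeff_mult sum.distrib sum_distrib_left)
    also have "\<dots> = 2 * coeff (p*p + q*a) i" by (simp add: mult.commute algebra_simps)
    finally show ?thesis by (simp add: Hc_alt)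
  qed
  show ?thesis unfolding Stilde_def using MA Hc Rhi by auto
qed

definition smooth :: "((nat \<Rightarrow> complex) \<Rightarrow> complex) \<Rightarrow> bool" where
  "smooth F \<longleftrightarrow> (\<forall>c k. (\<lambda>t. F (c(k := c k + t))) field_differentiable (at 0))"

lemma smooth_const: "smooth (\<lambda>c. a)"
  by (simp add: smooth_def)

lemma smooth_coord: "smooth (\<lambda>c. c l)"
  unfolding smooth_def
proof (intro allI)
  fix c k
  show "(\<lambda>t. (c(k := c k + t)) l) field_differentiable (at 0)"
  proof (cases "l = k")
    case True
    then show ?thesis by (simp add: field_differentiable_add field_differentiable_ident)
  qed simp
qed

lemma smooth_add: "smooth F \<Longrightarrow> smooth G \<Longrightarrow> smooth (\<lambda>c. F c + G c)"
  unfolding smooth_def by (auto intro: field_differentiable_add)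

lemma smooth_diff: "smooth F \<Longrightarrow> smooth G \<Longrightarrow> smooth (\<lambda>c. F c - G c)"
  unfolding smooth_def by (auto intro: field_differentiable_diff)

lemma smooth_minus: "smooth F \<Longrightarrow> smooth (\<lambda>c. - F c)"
  unfolding smooth_def by (auto intro: field_differentiable_minus)

lemma smooth_mult: "smooth F \<Longrightarrow> smooth G \<Longrightarrow> smooth (\<lambda>c. F c * G c)"
  unfolding smooth_def by (auto intro: field_differentiable_mult)

lemma smooth_sum: "(\<And>k. k \<in> K \<Longrightarrow> smooth (F k)) \<Longrightarrow> smooth (\<lambda>c. \<Sum>k\<in>K. F k c)"
  unfolding smooth_def by (auto intro: field_differentiable_sum)

lemma smooth_Qf: "smooth (\<lambda>c. Qf g c m)"
proof (induction "g - m" arbitrary: m rule: less_induct)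
  case less
  show ?case
  proof (cases "m < g")
    case True
    have "(\<lambda>c. Qf g c m) = (\<lambda>c. - (\<Sum>k\<in>{m+1..g}. Qf g c k * c (2*(k-m) - 1)))"
      using True by (simp add: Qf_lt)
    moreover have "smooth (\<lambda>c. - (\<Sum>k\<in>{m+1..g}. Qf g c k * c (2*(k-m) - 1)))"
      by (intro smooth_minus smooth_sum smooth_mult smooth_coord less.hyps) auto
    ultimately show ?thesis by simp
  next
    case False
    then have "(\<lambda>c. Qf g c m) = (\<lambda>c. if m = g then 1 else 0)"
      by (auto simp: Qf_g Qf_gt)
    then show ?thesis by (simp add: smooth_const)
  qed
qed

lemma smooth_Pf: "smooth (\<lambda>c. Pf g c m)"
  unfolding Pf_def by (intro smooth_minus smooth_sum smooth_mult smooth_coord smooth_Qf)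

lemma smooth_Bf: "smooth (\<lambda>c. Bf g c m)"
proof (induction "g - m" arbitrary: m rule: less_induct)
  case less
  show ?case
  proof (cases "m < g")
    case True
    have "(\<lambda>c. Bf g c m) = (\<lambda>c. c (2*g - 2*m) - (\<Sum>k\<in>{m+1..g}. Bf g c k * c (2*(k-m) - 1)))"
      using True by (simp add: Bf_lt)
    moreover have "smooth (\<lambda>c. c (2*g - 2*m) - (\<Sum>k\<in>{m+1..g}. Bf g c k * c (2*(k-m) - 1)))"
      by (intro smooth_diff smooth_sum smooth_mult smooth_coord less.hyps) auto
    ultimately show ?thesis by simp
  next
    case False
    then have "(\<lambda>c. Bf g c m) = (\<lambda>c. 0)" by (auto simp: Bf_ge)
    then show ?thesis by (simp add: smooth_const)
  qed
qed

lemma smooth_H1f: "smooth (\<lambda>c. H1f g c)"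
  unfolding H1f_def by (intro smooth_sum smooth_mult smooth_coord smooth_Qf)

lemma smooth_if: "smooth F \<Longrightarrow> smooth G \<Longrightarrow> smooth (\<lambda>c. if P then F c else G c)"
  by (cases P) auto

lemma smooth_Af: "smooth (\<lambda>c. Af g c m)"
  unfolding Af_def
  by (intro smooth_diff smooth_add smooth_if smooth_const smooth_coord smooth_H1f smooth_sum smooth_mult smooth_Bf)

lemma smooth_PM: "smooth (\<lambda>c. vec_nth (vec_nth (PM g c i) r) s)"
proof -
  have "r = 1 \<or> r = 2" "s = 1 \<or> s = 2" using exhaust_2 by auto
  then show ?thesis
    by (auto simp: PM_def smooth_Pf smooth_Qf smooth_Af smooth_Bf)
qed

definition fidx :: "nat \<Rightarrow> nat \<Rightarrow> nat" where
  "fidx g r = (if even r then g - r div 2 else (2*g+1-r) div 2)"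

definition frow :: "nat \<Rightarrow> 2" where
  "frow r = (if even r then 1 else 2)"

definition Fr :: "nat \<Rightarrow> nat \<Rightarrow> pmat \<Rightarrow> complex" where
  "Fr g r Y = vec_nth (vec_nth (Y (fidx g r)) (frow r)) 1"

definition dd :: "nat \<Rightarrow> nat \<Rightarrow> complex" where
  "dd g r = (if even r then -1 else if r = 2*g+1 then 2 else 1)"

lemma Fr_PM: "Fr g r (PM g c) = (if even r then Pf g c (fidx g r) else Af g c (fidx g r))"
  by (simp add: Fr_def frow_def PM_def)

lemma Fr_agree:
  assumes r: "1 \<le> r" "r \<le> 2*g+1" and a: "agree r c c'"
  shows "Fr g r (PM g c) = Fr g r (PM g c')"
proof (cases "even r")
  case True
  then have "2*(g - fidx g r) = r" using r by (auto simp: fidx_def elim!: evenE)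
  then have "Pf g c (fidx g r) = Pf g c' (fidx g r)" using a by (intro Pf_agree) simp
  then show ?thesis using True by (simp add: Fr_PM)
next
  case False
  then have "2*g+1 - 2*fidx g r = r" using r by (auto simp: fidx_def elim!: oddE)
  then have "Af g c (fidx g r) = Af g c' (fidx g r)" using a by (intro Af_agree) simp
  then show ?thesis using False by (simp add: Fr_PM)
qed

lemma Fr_aff:
  assumes r: "1 \<le> r" "r \<le> 2*g+1"
  shows "Fr g r (PM g (c(r := c r + t))) = Fr g r (PM g c) + dd g r * t"
proof -
  define c' where "c' = c(r := c r + t)"
  have ag: "agree (r - 1) c' c" unfolding c'_def by (rule agree_upd) (use r in auto)
  show ?thesis
  proof (cases "even r")
    case True
    define m where "m = fidx g r"
    have rm: "2*(g-m) = r" "m < g" using r True by (auto simp: m_def fidx_def elim!: evenE)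
    have S: "(\<Sum>k\<in>{m+1..<g}. Qf g c' k * c' (2*(k-m))) = (\<Sum>k\<in>{m+1..<g}. Qf g c k * c (2*(k-m)))"
    proof (rule sum.cong)
      fix k assume k: "k \<in> {m+1..<g}"
      have "Qf g c' k = Qf g c k" by (rule Qf_agree, rule agree_mono[OF ag]) (use k rm in auto)
      moreover have "c' (2*(k-m)) = c (2*(k-m))" using k rm by (auto simp: c'_def)
      ultimately show "Qf g c' k * c' (2*(k-m)) = Qf g c k * c (2*(k-m))" by simp
    qed simp
    have "Pf g c' m = Pf g c m - t"
      using Pf_split[OF rm(2), of c'] Pf_split[OF rm(2), of c] S rm by (simp add: c'_def)
    then show ?thesis using True by (simp add: Fr_PM m_def[symmetric] c'_def[symmetric] dd_def)
  next
    case False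
    define m where "m = fidx g r"
    have rm: "2*g+1-2*m = r" "m \<le> g" using r False by (auto simp: m_def fidx_def elim!: oddE)
    have S: "(\<Sum>k\<in>{m+1..g}. Bf g c' k * c' (2*(k-m))) = (\<Sum>k\<in>{m+1..g}. Bf g c k * c (2*(k-m)))"
    proof (rule sum.cong)
      fix k assume k: "k \<in> {m+1..g}"
      have "Bf g c' k = Bf g c k" by (rule Bf_agree, rule agree_mono[OF ag]) (use k rm in auto)
      moreover have "c' (2*(k-m)) = c (2*(k-m))" using k rm by (auto simp: c'_def)
      ultimately show "Bf g c' k * c' (2*(k-m)) = Bf g c k * c (2*(k-m))" by simp
    qed simp
    have cr: "c' r = c r + t" by (simp add: c'_def)
    have H: "m = 0 \<Longrightarrow> H1f g c' = H1f g c + t"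
    proof -
      assume m0: "m = 0"
      have "(\<Sum>k<g. Qf g c' k * c' (2*k+1)) = (\<Sum>k<g. Qf g c k * c (2*k+1))"
      proof (rule sum.cong)
        fix k assume k: "k \<in> {..<g}"
        have "Qf g c' k = Qf g c k" by (rule Qf_agree, rule agree_mono[OF ag]) (use k rm m0 in auto)
        moreover have "c' (2*k+1) = c (2*k+1)" using k rm m0 by (auto simp: c'_def)
        ultimately show "Qf g c' k * c' (2*k+1) = Qf g c k * c (2*k+1)" by simp
      qed simp
      moreover have "c' (2*g+1) = c (2*g+1) + t" using rm m0 by (simp add: c'_def)
      ultimately show ?thesis by (simp add: H1f_split)
    qed
    have "Af g c' m = Af g c m + (if m = 0 then 2 else 1) * t"
      unfolding Af_def using S rm cr H by (auto simp: c'_def)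
    moreover have "(m = 0) = (r = 2*g+1)" using rm by auto
    ultimately show ?thesis using False by (simp add: Fr_PM m_def[symmetric] c'_def[symmetric] dd_def)
  qed
qed

lemma dd_nz: "dd g r \<noteq> 0" by (simp add: dd_def)

lemma tri_solve:
  fixes J :: "nat \<Rightarrow> nat \<Rightarrow> complex"
  assumes up: "\<And>r k. 1 \<le> r \<Longrightarrow> r < k \<Longrightarrow> J r k = 0" and dg: "\<And>r. 1 \<le> r \<Longrightarrow> J r r \<noteq> 0"
  shows "\<exists>a. \<forall>r\<in>{1..N}. (\<Sum>k\<in>{1..N}. a k * J r k) = f r"
proof (induction N)
  case 0 then show ?case by simp
next
  case (Suc N)
  then obtain a where a: "\<forall>r\<in>{1..N}. (\<Sum>k\<in>{1..N}. a k * J r k) = f r" by blast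
  define v where "v = (f (Suc N) - (\<Sum>k\<in>{1..N}. a k * J (Suc N) k)) / J (Suc N) (Suc N)"
  define a' where "a' = a(Suc N := v)"
  have s: "(\<Sum>k\<in>{1..Suc N}. a' k * J r k) = (\<Sum>k\<in>{1..N}. a k * J r k) + v * J r (Suc N)" for r
  proof -
    have "(\<Sum>k\<in>{1..Suc N}. a' k * J r k) = (\<Sum>k\<in>{1..N}. a' k * J r k) + a' (Suc N) * J r (Suc N)"
      by (simp add: atLeastAtMostSuc_conv)
    also have "(\<Sum>k\<in>{1..N}. a' k * J r k) = (\<Sum>k\<in>{1..N}. a k * J r k)"
      by (rule sum.cong) (auto simp: a'_def)
    finally show ?thesis by (simp add: a'_def)
  qed
  have "\<forall>r\<in>{1..Suc N}. (\<Sum>k\<in>{1..Suc N}. a' k * J r k) = f r"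
  proof
    fix r assume r: "r \<in> {1..Suc N}"
    show "(\<Sum>k\<in>{1..Suc N}. a' k * J r k) = f r"
    proof (cases "r = Suc N")
      case True
      then show ?thesis using s[of r] dg[of "Suc N"] by (simp add: v_def)
    next
      case False
      then have "r \<in> {1..N}" using r by auto
      then show ?thesis using s[of r] a up[of r "Suc N"] by auto
    qed
  qed
  then show ?case by blast
qed


lemma deriv_const_zero:
  assumes "\<And>t. f t = a" and "(f has_field_derivative D) (at 0)"
  shows "D = 0"
proof -
  have "f = (\<lambda>_. a)" using assms(1) by auto
  then have "(f has_field_derivative 0) (at 0)" by (simp add: DERIV_const)
  then show ?thesis using DERIV_unique assms(2) by blast
qed

lemma deriv_affine:
  fixes f :: "complex \<Rightarrow> complex"
  assumes "\<And>t. f t = a + b * t" and "(f has_field_derivative D) (at 0)"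
  shows "D = b"
proof -
  have e: "f = (\<lambda>t. a + b * t)" using assms(1) by auto
  have "((\<lambda>t. a + b * t) has_field_derivative 0 + b) (at 0)"
    by (intro DERIV_add DERIV_const DERIV_cmult_Id)
  then show ?thesis using DERIV_unique assms(2) e by fastforce
qed

lemma sum_msc_nth:
  "vec_nth (vec_nth (\<Sum>k\<in>K. msc (a k) (M k)) r) s = (\<Sum>k\<in>K. a k * vec_nth (vec_nth (M k) r) s)"
  by simp

lemma E_props:
  assumes MA: "X \<in> MA g"
  shows "Efield X \<in> TStilde g X"
proof -
  have XA: "X (g+1) = Amat" and Xhi: "\<forall>i>g+1. X i = 0" using MA by (auto simp: MA_def)
  have "Efield X i = 0" if "i > g" for i
  proof (cases "i = g+1")
    case True
    then show ?thesis using XA by (simp add: vec_eq_iff forall_2 Efield_nth)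
  next
    case False
    then have "X i = 0" using Xhi that by simp
    then show ?thesis by (simp add: vec_eq_iff forall_2 Efield_nth)
  qed
  moreover have "trace (Efield X i) = 0" for i by (simp add: trace2 Efield_nth)
  ultimately show ?thesis unfolding TStilde_char using bil_E by blast
qed

theorem mainTheorem4:
  fixes g :: nat
  assumes "g \<ge> 1"
  shows "\<forall>h\<in>Mkdv g.
    (let c = (\<lambda>l. fls_nth h (int l)); X = Vcoord g c in
      X \<in> Stilde g \<and>
      (\<exists>D :: nat \<Rightarrow> pmat.
         (\<forall>k\<in>{1..2*g+1}. \<forall>i r s.
            ((\<lambda>t. Vcoord g (c(k := c k + t)) i $ r $ s) has_field_derivative (D k i $ r $ s)) (at 0)) \<and>
         (let TQ = {(\<lambda>i. \<Sum>k\<in>{1..2*g+1}. msc (a k) (D k i)) | a. True} in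
            TStilde g X = {(\<lambda>i. u i + msc s (Efield X i)) | u s. u \<in> TQ} \<and>
            Efield X \<noteq> (\<lambda>i. 0) \<and>
            (\<forall>s. (\<lambda>i. msc s (Efield X i)) \<in> TQ \<longrightarrow> s = 0))))"
proof (intro ballI)
  fix h assume h: "h \<in> Mkdv g"
  have g: "g \<ge> 1" by (rule assms)
  define c where "c = (\<lambda>l. fls_nth h (int l))"
  define X where "X = Vcoord g c"
  have VC: "Vcoord g c' = PM g c'" for c' by (rule Vcoord_rep[OF g])
  have X: "X = PM g c" by (simp add: X_def VC)
  have XS: "X \<in> Stilde g" unfolding X by (rule PM_Stilde[OF g])
  have MA: "X \<in> MA g" using XS by (simp add: Stilde_def)
  have XA: "X (g+1) = Amat" and Xhi: "\<forall>i>g+1. X i = 0" using MA by (auto simp: MA_def)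
  define D where "D = (\<lambda>k i. \<chi> r s. deriv (\<lambda>t. vec_nth (vec_nth (PM g (c(k := c k + t)) i) r) s) 0)"
  have Dder: "((\<lambda>t. vec_nth (vec_nth (PM g (c(k := c k + t)) i) r) s) has_field_derivative
                 vec_nth (vec_nth (D k i) r) s) (at 0)" for k i r s
  proof -
    have "(\<lambda>t. vec_nth (vec_nth (PM g (c(k := c k + t)) i) r) s) field_differentiable (at 0)"
      using smooth_PM[of g i r s] unfolding smooth_def by blast
    then show ?thesis unfolding D_def by (simp add: DERIV_deriv_iff_field_differentiable)
  qed
  have c0: "c(k := c k + 0) = c" for k by simp
  have Dhi: "D k i = 0" if "i > g" for k i
  proof -
    have "vec_nth (vec_nth (D k i) r) s = 0" for r s
    proof (rule deriv_const_zero[OF _ Dder])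
      fix t
      show "vec_nth (vec_nth (PM g (c(k := c k + t)) i) r) s = vec_nth (vec_nth (PM g c i) r) s"
        using that by (simp add: PM_def Pf_ge Qf_gt Bf_ge Af_def)
    qed
    then show ?thesis by (simp add: vec_eq_iff)
  qed
  have Dtr: "trace (D k i) = 0" for k i
  proof -
    have "((\<lambda>t. vec_nth (vec_nth (PM g (c(k := c k + t)) i) 1) 1 + vec_nth (vec_nth (PM g (c(k := c k + t)) i) 2) 2)
       has_field_derivative vec_nth (vec_nth (D k i) 1) 1 + vec_nth (vec_nth (D k i) 2) 2) (at 0)"
      by (intro DERIV_add Dder)
    moreover have "vec_nth (vec_nth (PM g (c(k := c k + t)) i) 1) 1 + vec_nth (vec_nth (PM g (c(k := c k + t)) i) 2) 2 = 0" for t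
      using PB_sum[OF g] by (simp add: PM_def)
    ultimately show ?thesis unfolding trace2 by (intro deriv_const_zero) auto
  qed
  have Dbil: "bil X (D k) i = 0" if "i \<in> {g+1..2*g+1}" for k i
  proof -
    have "((\<lambda>t. Hc (PM g (c(k := c k + t))) i) has_field_derivative bil (PM g (c(k := c k + 0))) (D k) i) (at 0)"
      by (rule Hc_deriv) (rule Dder)
    then have d: "((\<lambda>t. Hc (PM g (c(k := c k + t))) i) has_field_derivative bil X (D k) i) (at 0)"
      by (simp add: X)
    have "Hc (PM g (c(k := c k + t))) i = (if i = 2*g+1 then 1 else 0)" for t
      using PM_Stilde[OF g, of "c(k := c k + t)"] that unfolding Stilde_def by auto
    then show ?thesis using d by (intro deriv_const_zero) auto
  qed
  have DT: "D k \<in> TStilde g X" for k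
    unfolding TStilde_char using Dhi Dtr Dbil by blast
  have Dpi: "vec_nth (vec_nth (D k g) 1) 1 = 0" for k
  proof (rule deriv_const_zero[OF _ Dder])
    fix t show "vec_nth (vec_nth (PM g (c(k := c k + t)) g) 1) 1 = vec_nth (vec_nth (PM g c g) 1) 1"
      by (simp add: PM_def Pf_ge)
  qed
  define E where "E = Efield X"
  have ET: "E \<in> TStilde g X" unfolding E_def by (rule E_props[OF MA])
  have Epi: "vec_nth (vec_nth (E g) 1) 1 = -1"
    by (simp add: E_def Efield_nth X PM_def Qf_g)
  have lin: "(\<lambda>i. (\<Sum>k\<in>K. msc (w k) (W k i))) \<in> TStilde g X"
    if fin: "finite K" and W: "\<And>k. k \<in> K \<Longrightarrow> W k \<in> TStilde g X" for K w W
  proof -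
    have Wc: "\<forall>i>g. W k i = 0" "\<forall>i. trace (W k i) = 0" "\<forall>i\<in>{g+1..2*g+1}. bil X (W k) i = 0"
      if "k \<in> K" for k using W[OF that] unfolding TStilde_char by auto
    have "(\<Sum>k\<in>K. msc (w k) (W k i)) = 0" if "i > g" for i
      using Wc that by (simp add: vec_eq_iff msc_def)
    moreover have "trace (\<Sum>k\<in>K. msc (w k) (W k i)) = 0" for i
      using Wc by (simp add: trace2 sum.distrib[symmetric] distrib_left[symmetric])
    moreover have "bil X (\<lambda>i. \<Sum>k\<in>K. msc (w k) (W k i)) i = 0" if "i \<in> {g+1..2*g+1}" for i
    proof -
      have "bil X (\<lambda>i. \<Sum>k\<in>K. msc (w k) (W k i)) i = (\<Sum>k\<in>K. w k * bil X (W k) i)"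
        by (rule bil_lin) simp
      then show ?thesis using Wc that by simp
    qed
    ultimately show ?thesis unfolding TStilde_char by blast
  qed
  define TQ where "TQ = {(\<lambda>i. \<Sum>k\<in>{1..2*g+1}. msc (a k) (D k i)) | a. True}"
  have eq: "TStilde g X = {(\<lambda>i. u i + msc s (E i)) | u s. u \<in> TQ}"
  proof
    show "{(\<lambda>i. u i + msc s (E i)) | u s. u \<in> TQ} \<subseteq> TStilde g X"
    proof
      fix Y assume "Y \<in> {(\<lambda>i. u i + msc s (E i)) | u s. u \<in> TQ}"
      then obtain a s where Y: "Y = (\<lambda>i. (\<Sum>k\<in>{1..2*g+1}. msc (a k) (D k i)) + msc s (E i))"
        unfolding TQ_def by blast
      define W where "W k = (if k = 0 then E else D k)" for k
      define w where "w k = (if k = 0 then s else a k)" for k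
      have YW: "Y = (\<lambda>i. \<Sum>k\<in>insert 0 {1..2*g+1}. msc (w k) (W k i))"
      proof -
        have "(\<Sum>k\<in>{1..2*g+1}. msc (w k) (W k i)) = (\<Sum>k\<in>{1..2*g+1}. msc (a k) (D k i))" for i
          by (rule sum.cong) (auto simp: w_def W_def)
        then show ?thesis by (simp add: Y w_def W_def add.commute)
      qed
      have WT: "W k \<in> TStilde g X" for k using DT ET by (simp add: W_def)
      show "Y \<in> TStilde g X" unfolding YW by (rule lin) (simp_all add: WT)
    qed
  next
    show "TStilde g X \<subseteq> {(\<lambda>i. u i + msc s (E i)) | u s. u \<in> TQ}"
    proof
      fix Y assume YT: "Y \<in> TStilde g X"
      define s where "s = - vec_nth (vec_nth (Y g) 1) 1"
      define u where "u = (\<lambda>i. Y i - msc s (E i))"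
      have uT: "u \<in> TStilde g X"
      proof -
        define W where "W k = (if k = (0::nat) then Y else E)" for k
        define w where "w k = (if k = (0::nat) then 1 else - s)" for k
        have uW: "u = (\<lambda>i. \<Sum>k\<in>{0,1}. msc (w k) (W k i))"
          by (simp add: u_def W_def w_def msc_def vec_eq_iff fun_eq_iff)
        have WT: "W k \<in> TStilde g X" for k using YT ET by (simp add: W_def)
        show ?thesis unfolding uW by (rule lin) (simp_all add: WT)
      qed
      have upi: "vec_nth (vec_nth (u g) 1) 1 = 0" by (simp add: u_def s_def Epi)
      define J where "J r k = (if r \<le> 2*g+1 \<and> k \<le> 2*g+1 then Fr g r (D k) else if r = k then 1 else 0)" for r k
      have FrD: "Fr g r (D k) = vec_nth (vec_nth (D k (fidx g r)) (frow r)) 1" for r k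
        by (simp add: Fr_def)
      have Jup: "J r k = 0" if "1 \<le> r" "r < k" for r k
      proof (cases "r \<le> 2*g+1 \<and> k \<le> 2*g+1")
        case True
        have "Fr g r (D k) = 0" unfolding FrD
        proof (rule deriv_const_zero[OF _ Dder])
          fix t
          have "agree r (c(k := c k + t)) c" by (rule agree_upd) (use that in auto)
          then show "vec_nth (vec_nth (PM g (c(k := c k + t)) (fidx g r)) (frow r)) 1 = Fr g r (PM g c)"
            using Fr_agree[of r g "c(k := c k + t)" c] True that by (simp add: Fr_def)
        qed
        then show ?thesis using True by (simp add: J_def)
      qed (use that in \<open>auto simp: J_def\<close>)
      have Jdg: "J r r \<noteq> 0" if "1 \<le> r" for r
      proof (cases "r \<le> 2*g+1")
        case True
        have "Fr g r (D r) = dd g r" unfolding FrD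
        proof (rule deriv_affine[OF _ Dder])
          fix t
          show "vec_nth (vec_nth (PM g (c(r := c r + t)) (fidx g r)) (frow r)) 1 = Fr g r (PM g c) + dd g r * t"
            using Fr_aff[of r g c t] True that by (simp add: Fr_def)
        qed
        then show ?thesis using True dd_nz by (simp add: J_def)
      qed (simp add: J_def)
      obtain a where a: "\<forall>r\<in>{1..2*g+1}. (\<Sum>k\<in>{1..2*g+1}. a k * J r k) = Fr g r u"
        using tri_solve[of J "2*g+1" "\<lambda>r. Fr g r u"] Jup Jdg by blast
      define W where "W k = (if k = 0 then u else D k)" for k
      define w where "w k = (if k = 0 then 1 else - a k)" for k
      define Z where "Z = (\<lambda>i. \<Sum>k\<in>insert 0 {1..2*g+1}. msc (w k) (W k i))"
      have ZT: "Z \<in> TStilde g X"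
      proof -
        have WT: "W k \<in> TStilde g X" for k using uT DT by (simp add: W_def)
        show ?thesis unfolding Z_def by (rule lin) (simp_all add: WT)
      qed
      have Zent: "vec_nth (vec_nth (Z i) r) s' = vec_nth (vec_nth (u i) r) s' -
          (\<Sum>k\<in>{1..2*g+1}. a k * vec_nth (vec_nth (D k i) r) s')" for i r s'
      proof -
        have "vec_nth (vec_nth (Z i) r) s' = w 0 * vec_nth (vec_nth (W 0 i) r) s' +
            (\<Sum>k\<in>{1..2*g+1}. w k * vec_nth (vec_nth (W k i) r) s')"
          unfolding Z_def sum_msc_nth by (subst sum.insert) auto
        also have "(\<Sum>k\<in>{1..2*g+1}. w k * vec_nth (vec_nth (W k i) r) s') =
            (\<Sum>k\<in>{1..2*g+1}. - (a k * vec_nth (vec_nth (D k i) r) s'))"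
          by (rule sum.cong) (auto simp: w_def W_def)
        finally show ?thesis by (simp add: w_def W_def sum_negf)
      qed
      have FrZ: "Fr g r Z = 0" if "r \<in> {1..2*g+1}" for r
      proof -
        have "Fr g r Z = Fr g r u - (\<Sum>k\<in>{1..2*g+1}. a k * Fr g r (D k))"
          by (simp add: Fr_def Zent)
        also have "(\<Sum>k\<in>{1..2*g+1}. a k * Fr g r (D k)) = (\<Sum>k\<in>{1..2*g+1}. a k * J r k)"
          by (rule sum.cong) (use that in \<open>auto simp: J_def\<close>)
        finally show ?thesis using a that by simp
      qed
      have Zpi: "vec_nth (vec_nth (Z g) 1) 1 = 0"
        using upi Dpi by (simp add: Zent)
      have Zc: "\<forall>i>g. Z i = 0" "\<forall>i. trace (Z i) = 0" "\<forall>i\<in>{g+1..2*g+1}. bil X Z i = 0"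
        using ZT unfolding TStilde_char by auto
      have Z0: "\<forall>i\<le>g. vec_nth (vec_nth (Z i) 1) 1 = 0 \<and> vec_nth (vec_nth (Z i) 2) 1 = 0 \<and> vec_nth (vec_nth (Z i) 2) 2 = 0"
      proof (intro allI impI)
        fix i assume i: "i \<le> g"
        have z11: "vec_nth (vec_nth (Z i) 1) 1 = 0"
        proof (cases "i = g")
          case True then show ?thesis using Zpi by simp
        next
          case False
          define r where "r = 2*(g-i)"
          have "r \<in> {1..2*g+1}" "even r" "fidx g r = i" "frow r = 1"
            using i False by (auto simp: r_def fidx_def frow_def)
          then show ?thesis using FrZ[of r] by (simp add: Fr_def)
        qed
        moreover have "vec_nth (vec_nth (Z i) 2) 1 = 0"
        proof -
          define r where "r = 2*g+1-2*i"
          have "r \<in> {1..2*g+1}" "odd r" "fidx g r = i" "frow r = 2"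
            using i by (auto simp: r_def fidx_def frow_def)
          then show ?thesis using FrZ[of r] by (simp add: Fr_def)
        qed
        moreover have "vec_nth (vec_nth (Z i) 2) 2 = 0" using spec[OF Zc(2), of i] z11 by (simp add: trace2)
        ultimately show "vec_nth (vec_nth (Z i) 1) 1 = 0 \<and> vec_nth (vec_nth (Z i) 2) 1 = 0 \<and> vec_nth (vec_nth (Z i) 2) 2 = 0"
          by simp
      qed
      have "Z = (\<lambda>i. 0)" by (rule Y_zero[OF XA Xhi Zc(1) Z0 Zc(3)])
      then have "vec_nth (vec_nth (u i) r) s' = (\<Sum>k\<in>{1..2*g+1}. a k * vec_nth (vec_nth (D k i) r) s')" for i r s'
        using Zent[of i r s'] by simp
      then have "u = (\<lambda>i. \<Sum>k\<in>{1..2*g+1}. msc (a k) (D k i))"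
        by (simp add: fun_eq_iff vec_eq_iff)
      then have "u \<in> TQ" unfolding TQ_def by blast
      moreover have "Y = (\<lambda>i. u i + msc s (E i))" by (simp add: u_def)
      ultimately show "Y \<in> {(\<lambda>i. u i + msc s (E i)) | u s. u \<in> TQ}" by blast
    qed
  qed
  have Enz: "E \<noteq> (\<lambda>i. 0)"
  proof
    assume "E = (\<lambda>i. 0)"
    then show False using Epi by simp
  qed
  have Etr: "s = 0" if "(\<lambda>i. msc s (E i)) \<in> TQ" for s
  proof -
    from that obtain a where "(\<lambda>i. msc s (E i)) = (\<lambda>i. \<Sum>k\<in>{1..2*g+1}. msc (a k) (D k i))"
      unfolding TQ_def by auto
    then have "vec_nth (vec_nth (msc s (E g)) 1) 1 = vec_nth (vec_nth (\<Sum>k\<in>{1..2*g+1}. msc (a k) (D k g)) 1) 1"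
      by metis
    then show ?thesis using Epi Dpi by simp
  qed
  have derivs: "\<forall>k\<in>{1..2*g+1}. \<forall>i r s.
            ((\<lambda>t. Vcoord g (c(k := c k + t)) i $ r $ s) has_field_derivative (D k i $ r $ s)) (at 0)"
    using Dder by (simp add: VC)
  show "let c = (\<lambda>l. fls_nth h (int l)); X = Vcoord g c in
      X \<in> Stilde g \<and>
      (\<exists>D :: nat \<Rightarrow> pmat.
         (\<forall>k\<in>{1..2*g+1}. \<forall>i r s.
            ((\<lambda>t. Vcoord g (c(k := c k + t)) i $ r $ s) has_field_derivative (D k i $ r $ s)) (at 0)) \<and>
         (let TQ = {(\<lambda>i. \<Sum>k\<in>{1..2*g+1}. msc (a k) (D k i)) | a. True} in
            TStilde g X = {(\<lambda>i. u i + msc s (Efield X i)) | u s. u \<in> TQ} \<and>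
            Efield X \<noteq> (\<lambda>i. 0) \<and>
            (\<forall>s. (\<lambda>i. msc s (Efield X i)) \<in> TQ \<longrightarrow> s = 0)))"
    unfolding Let_def c_def[symmetric] X_def[symmetric]
    using XS derivs eq Enz Etr unfolding TQ_def E_def by blast
qed


end
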